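(* Assume $(\mathbf{H}_f)$ and $(\mathbf{H}_g)$, let $\eta\in C^{\beta\text{-Hol}}([-r,0],\mathbb{R}^d)$ and let $x$ be the solution of the delay equation on $[-r,T]$ with $x_0=\eta$. Let $C:=2(\|g(0)\|+L'+L_g(K+1))$ with $L':=\max\{L_f,\|f(0)\|\}$ and $K:=\frac{1}{1-2^{1-(\nu+\beta)}}$, fix $\mu\in(0,\min\{1,C\})$, and let $t_i$ and $N(t,\omega)$ be the associated stopping times and counting function. Then for every $t\in[0,T]$, $$\|x_t\|_{\infty,\beta,[-r,0]}\le (1-\mu)^{-(N(t,\omega)+1)}\big[\|\eta\|_{\infty,\beta,[-r,0]}+1\big].$$ Moreover, for every integer $k\ge1$ with $k(\nu-\beta)\ge1$, $$N(T,\omega)\le 2^{k-1}\Big(\frac{C}{\mu}\Big)^k\Big(T^{k(1-\beta)}+T^{k(\nu-\beta)}|||\omega|||^k_{\nu,[0,T]}\Big).$$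
   Context: $\|\cdot\|$ is the Euclidean norm; $r,T>0$; $C_r:=C([-r,0],\mathbb{R}^d)$ with sup norm; $x_t(u)=x(t+u)$, $u\in[-r,0]$. For $0<\alpha\le1$: $|||x|||_{\alpha,[a,b]}=\sup_{a\le s<t\le b}\frac{\|x(t)-x(s)\|}{(t-s)^\alpha}$, $\|x\|_{\infty,\alpha,[a,b]}=\sup_{[a,b]}\|x\|+|||x|||_{\alpha,[a,b]}$, $C^{\alpha\text{-Hol}}$ the space where finite. Parameters: $\nu\in(\tfrac12,1]$; $\omega\in C^{\nu\text{-Hol}}([0,T],\mathbb{R})$ with $\lim_{h\to0}\sup_{0\le s<t\le T,\,t-s\le h}\frac{|\omega(t)-\omega(s)|}{(t-s)^\nu}=0$; $\frac{1-\nu}{\nu}<\delta\le1$; $\beta\in(0,\nu)$ with $\beta\delta+\nu>1$. $(\mathbf{H}_f)$: $\|f(\xi)-f(\eta)\|\le L_f\|\xi-\eta\|_{\infty,[-r,0]}$ for $f:C_r\to\mathbb{R}^d$. $(\mathbf{H}_g)$: $g:C_r\to\mathbb{R}^d$ Fréchet $C^1$, $\|Dg\|\le L_g$, and for each $M>0$ there is $L_M$ with $\|Dg(\xi)-Dg(\eta)\|\le L_M\|\xi-\eta\|^\delta_{\infty,[-r,0]}$ for $\|\xi\|,\|\eta\|\le M$. The solution is the unique $x\in C^{\beta\text{-Hol}}([-r,T],\mathbb{R}^d)$ with $x_0=\eta$ and $x(t)=\eta(0)+\int_0^tf(x_s)ds+\int_0^tg(x_s)d\omega(s)$ (Young integral)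 for $t\in[0,T]$. Stopping times: given $C>0$ and $\mu\in(0,C)$, set $t_0=0$ and $t_{i+1}=\sup\{t\in[t_i,T]: C[(t-t_i)^{1-\beta}+(t-t_i)^{\nu-\beta}|||\omega|||_{\nu,[t_i,t]}]\le\mu\}$; the counting function is $N(t,\omega):=\#\{i\ge1: t_i<t\}$ for $t\in[0,T]$ (the number of stopping times in $(0,t)$). *)

theory Defs
  imports "HOL-Analysis.Analysis"
begin

text \<open>Supremum norm of x over [a,b] (0 is inserted so the empty/degenerate case is harmless).\<close>
definition sup_norm :: "real \<Rightarrow> real \<Rightarrow> (real \<Rightarrow> 'a::real_normed_vector) \<Rightarrow> real" where
  "sup_norm a b x = Sup (insert 0 ((\<lambda>t. norm (x t)) ` {a..b}))"

definition hol_quots :: "real \<Rightarrow> real \<Rightarrow> real \<Rightarrow> (real \<Rightarrow> 'a::real_normed_vector) \<Rightarrow> real set" where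
  "hol_quots \<alpha> a b x = {norm (x t - x s) / (t - s) powr \<alpha> | s t. a \<le> s \<and> s < t \<and> t \<le> b}"

definition hol_semi :: "real \<Rightarrow> real \<Rightarrow> real \<Rightarrow> (real \<Rightarrow> 'a::real_normed_vector) \<Rightarrow> real" where
  "hol_semi \<alpha> a b x = Sup (insert 0 (hol_quots \<alpha> a b x))"

definition holder_on :: "real \<Rightarrow> real \<Rightarrow> real \<Rightarrow> (real \<Rightarrow> 'a::real_normed_vector) \<Rightarrow> bool" where
  "holder_on \<alpha> a b x \<longleftrightarrow> bdd_above (hol_quots \<alpha> a b x)"

definition hol_norm :: "real \<Rightarrow> real \<Rightarrow> real \<Rightarrow> (real \<Rightarrow> 'a::real_normed_vector) \<Rightarrow> real" where
  "hol_norm \<alpha> a b x = sup_norm a b x + hol_semi \<alpha> a b x"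

text \<open>x_t(u) = x(t+u); only values for u in [-r,0] are relevant.\<close>
definition seg :: "(real \<Rightarrow> 'a) \<Rightarrow> real \<Rightarrow> real \<Rightarrow> 'a" where
  "seg x t = (\<lambda>u. x (t + u))"

text \<open>Elements of C_r are represented by functions continuous on [-r,0]; cr_norm is the sup norm.\<close>
definition in_Cr :: "real \<Rightarrow> (real \<Rightarrow> 'a::real_normed_vector) \<Rightarrow> bool" where
  "in_Cr r \<xi> \<longleftrightarrow> continuous_on {-r..0} \<xi>"

definition cr_norm :: "real \<Rightarrow> (real \<Rightarrow> 'a::real_normed_vector) \<Rightarrow> real" where
  "cr_norm r \<xi> = sup_norm (-r) 0 \<xi>"

text \<open>Dg is the Frechet derivative of g on C_r and g is C^1 (Dg continuous in operator norm).\<close>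
definition frechet_C1_Cr ::
  "real \<Rightarrow> ((real \<Rightarrow> 'a::real_normed_vector) \<Rightarrow> 'b::real_normed_vector)
     \<Rightarrow> ((real \<Rightarrow> 'a) \<Rightarrow> (real \<Rightarrow> 'a) \<Rightarrow> 'b) \<Rightarrow> bool" where
  "frechet_C1_Cr r g Dg \<longleftrightarrow>
     (\<forall>\<xi>. in_Cr r \<xi> \<longrightarrow>
        (\<forall>h1 h2 a b. in_Cr r h1 \<longrightarrow> in_Cr r h2 \<longrightarrow>
            Dg \<xi> (\<lambda>u. a *\<^sub>R h1 u + b *\<^sub>R h2 u) = a *\<^sub>R Dg \<xi> h1 + b *\<^sub>R Dg \<xi> h2)
      \<and> (\<exists>B. \<forall>h. in_Cr r h \<longrightarrow> norm (Dg \<xi> h) \<le> B * cr_norm r h)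
      \<and> (\<forall>\<epsilon>>0. \<exists>\<delta>>0. \<forall>h. in_Cr r h \<longrightarrow> cr_norm r h < \<delta> \<longrightarrow>
            norm (g (\<lambda>u. \<xi> u + h u) - g \<xi> - Dg \<xi> h) \<le> \<epsilon> * cr_norm r h)
      \<and> (\<forall>\<epsilon>>0. \<exists>\<delta>>0. \<forall>\<eta>. in_Cr r \<eta> \<longrightarrow> cr_norm r (\<lambda>u. \<eta> u - \<xi> u) < \<delta> \<longrightarrow>
            (\<forall>h. in_Cr r h \<longrightarrow> norm (Dg \<eta> h - Dg \<xi> h) \<le> \<epsilon> * cr_norm r h)))"

definition tagged_partition :: "real \<Rightarrow> real \<Rightarrow> real list \<Rightarrow> (nat \<Rightarrow> real) \<Rightarrow> bool" where
  "tagged_partition a b p \<tau> \<longleftrightarrow> p \<noteq> [] \<and> hd p = a \<and> last p = b \<and> sorted_wrt (<) p \<and>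
     (\<forall>i < length p - 1. p ! i \<le> \<tau> i \<and> \<tau> i \<le> p ! Suc i)"

definition mesh :: "real list \<Rightarrow> real" where
  "mesh p = Max (insert 0 {p ! Suc i - p ! i | i. i < length p - 1})"

definition rs_sum :: "(real \<Rightarrow> 'a::real_normed_vector) \<Rightarrow> (real \<Rightarrow> real) \<Rightarrow> real list \<Rightarrow> (nat \<Rightarrow> real) \<Rightarrow> 'a" where
  "rs_sum y \<omega> p \<tau> = (\<Sum>i < length p - 1. (\<omega> (p ! Suc i) - \<omega> (p ! i)) *\<^sub>R y (\<tau> i))"

definition has_young_integral :: "(real \<Rightarrow> 'a::real_normed_vector) \<Rightarrow> (real \<Rightarrow> real) \<Rightarrow> real \<Rightarrow> real \<Rightarrow> 'a \<Rightarrow> bool" where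
  "has_young_integral y \<omega> a b I \<longleftrightarrow>
     (\<forall>\<epsilon>>0. \<exists>\<delta>>0. \<forall>p \<tau>. tagged_partition a b p \<tau> \<longrightarrow> mesh p < \<delta> \<longrightarrow> norm (rs_sum y \<omega> p \<tau> - I) < \<epsilon>)"

primrec stop_time :: "real \<Rightarrow> real \<Rightarrow> real \<Rightarrow> real \<Rightarrow> (real \<Rightarrow> real) \<Rightarrow> real \<Rightarrow> nat \<Rightarrow> real" where
  "stop_time C \<mu> \<beta> \<nu> \<omega> T 0 = 0"
| "stop_time C \<mu> \<beta> \<nu> \<omega> T (Suc i) =
     (let ti = stop_time C \<mu> \<beta> \<nu> \<omega> T i in
      Sup {t \<in> {ti..T}. C * ((t - ti) powr (1 - \<beta>) + (t - ti) powr (\<nu> - \<beta>) * hol_semi \<nu> ti t \<omega>) \<le> \<mu>})"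

definition stop_set :: "real \<Rightarrow> real \<Rightarrow> real \<Rightarrow> real \<Rightarrow> (real \<Rightarrow> real) \<Rightarrow> real \<Rightarrow> real \<Rightarrow> nat set" where
  "stop_set C \<mu> \<beta> \<nu> \<omega> T t = {i. 1 \<le> i \<and> stop_time C \<mu> \<beta> \<nu> \<omega> T i < t}"

definition count_N :: "real \<Rightarrow> real \<Rightarrow> real \<Rightarrow> real \<Rightarrow> (real \<Rightarrow> real) \<Rightarrow> real \<Rightarrow> real \<Rightarrow> nat" where
  "count_N C \<mu> \<beta> \<nu> \<omega> T t = card (stop_set C \<mu> \<beta> \<nu> \<omega> T t)"

end

theory Submission
  imports Defs
begin


lemma sup_norm_le:
  assumes "0 \<le> M" "\<And>t. t \<in> {a..b} \<Longrightarrow> norm (x t) \<le> M"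
  shows "sup_norm a b x \<le> M"
  unfolding sup_norm_def using assms by (intro cSup_least) auto

lemma bdd_sup_norm:
  fixes a b :: real
  assumes "continuous_on {a..b} x"
  shows "bdd_above (insert 0 ((\<lambda>t. norm (x t)) ` {a..b}))"
proof -
  have "compact ((\<lambda>t. norm (x t)) ` {a..b})"
    using compact_Icc[of a b] by (intro compact_continuous_image continuous_on_norm assms)
  then have "bounded ((\<lambda>t. norm (x t)) ` {a..b})" by (rule compact_imp_bounded)
  then show ?thesis by (auto intro: bounded_imp_bdd_above)
qed

lemma sup_norm_upper:
  assumes "continuous_on {a..b} x" "t \<in> {a..b}"
  shows "norm (x t) \<le> sup_norm a b x"
  unfolding sup_norm_def using assms bdd_sup_norm[OF assms(1)] by (intro cSup_upper) auto

lemma sup_norm_ge0: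
  assumes "continuous_on {a..b} x"
  shows "0 \<le> sup_norm a b x"
  unfolding sup_norm_def using bdd_sup_norm[OF assms(1)] by (intro cSup_upper) auto

lemma sup_norm_cong:
  assumes "\<And>t. t \<in> {a..b} \<Longrightarrow> x t = y t"
  shows "sup_norm a b x = sup_norm a b y"
  unfolding sup_norm_def using assms by (metis (no_types, lifting) image_cong)

lemma hol_quots_cong:
  assumes "\<And>t. t \<in> {a..b} \<Longrightarrow> x t = y t"
  shows "hol_quots \<alpha> a b x = hol_quots \<alpha> a b y"
  unfolding hol_quots_def using assms by (auto, metis atLeastAtMost_iff less_eq_real_def order_trans)+

lemma hol_semi_cong:
  assumes "\<And>t. t \<in> {a..b} \<Longrightarrow> x t = y t"
  shows "hol_semi \<alpha> a b x = hol_semi \<alpha> a b y"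
  unfolding hol_semi_def using hol_quots_cong[OF assms] by simp

lemma hol_semi_ge0:
  assumes "holder_on \<alpha> a b x"
  shows "0 \<le> hol_semi \<alpha> a b x"
  using assms unfolding hol_semi_def holder_on_def by (intro cSup_upper) auto

lemma hol_semi_upper:
  assumes "holder_on \<alpha> a b x" "a \<le> s" "s < t" "t \<le> b"
  shows "norm (x t - x s) \<le> hol_semi \<alpha> a b x * (t - s) powr \<alpha>"
proof -
  have "norm (x t - x s) / (t - s) powr \<alpha> \<in> hol_quots \<alpha> a b x"
    unfolding hol_quots_def using assms by blast
  then have "norm (x t - x s) / (t - s) powr \<alpha> \<le> hol_semi \<alpha> a b x"
    using assms(1) unfolding hol_semi_def holder_on_def by (intro cSup_upper) auto
  moreover have "(t - s) powr \<alpha> > 0" using assms by simp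
  ultimately show ?thesis by (simp add: divide_le_eq)
qed

lemma hol_semi_le:
  assumes "0 \<le> M" "\<And>s t. a \<le> s \<Longrightarrow> s < t \<Longrightarrow> t \<le> b \<Longrightarrow> norm (x t - x s) \<le> M * (t - s) powr \<alpha>"
  shows "hol_semi \<alpha> a b x \<le> M"
  unfolding hol_semi_def
proof (intro cSup_least)
  fix q assume "q \<in> insert 0 (hol_quots \<alpha> a b x)"
  then show "q \<le> M"
  proof
    assume "q \<in> hol_quots \<alpha> a b x"
    then obtain s t where st: "a \<le> s" "s < t" "t \<le> b" "q = norm (x t - x s) / (t - s) powr \<alpha>"
      unfolding hol_quots_def by blast
    have "(t - s) powr \<alpha> > 0" using st by simp
    then show ?thesis using assms(2)[OF st(1-3)] st(4) by (simp add: divide_le_eq)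
  qed (use assms in auto)
qed auto

lemma holder_on_subset:
  assumes "holder_on \<alpha> a b x" "a \<le> a'" "b' \<le> b"
  shows "holder_on \<alpha> a' b' x"
  using assms(1) unfolding holder_on_def hol_quots_def
  apply (rule bdd_above_mono)
  using assms by auto (metis order.trans)

lemma hol_semi_mono:
  assumes "holder_on \<alpha> a b x" "a \<le> a'" "b' \<le> b"
  shows "hol_semi \<alpha> a' b' x \<le> hol_semi \<alpha> a b x"
  by (intro hol_semi_le hol_semi_ge0[OF assms(1)] hol_semi_upper[OF assms(1)]) (use assms in auto)

lemma holder_cont:
  fixes x :: "real \<Rightarrow> 'a::real_normed_vector"
  assumes H: "0 \<le> H" "0 < \<alpha>"
    and b: "\<And>s t. s \<in> S \<Longrightarrow> t \<in> S \<Longrightarrow> s < t \<Longrightarrow> norm (x t - x s) \<le> H * (t - s) powr \<alpha>"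
  shows "continuous_on S x"
  unfolding continuous_on_iff
proof (intro ballI allI impI)
  fix t e assume t: "t \<in> S" and e: "(0::real) < e"
  define d where "d = (e / (H + 1)) powr (1 / \<alpha>)"
  have d: "d > 0" using e H unfolding d_def by simp
  show "\<exists>d>0. \<forall>t'\<in>S. dist t' t < d \<longrightarrow> dist (x t') (x t) < e"
  proof (intro exI[of _ d] conjI ballI impI d)
    fix t' assume t': "t' \<in> S" "dist t' t < d"
    have key: "H * \<bar>t' - t\<bar> powr \<alpha> < e" if "t' \<noteq> t"
    proof -
      have "\<bar>t' - t\<bar> powr \<alpha> < d powr \<alpha>"
        using t' that H by (intro powr_less_mono2) (auto simp: dist_real_def)
      also have "d powr \<alpha> = e / (H + 1)"
        unfolding d_def using H e by (simp add: powr_powr)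
      finally have "(H + 1) * \<bar>t' - t\<bar> powr \<alpha> < e" using H by (simp add: field_simps)
      moreover have "H * \<bar>t' - t\<bar> powr \<alpha> \<le> (H + 1) * \<bar>t' - t\<bar> powr \<alpha>"
        by (intro mult_right_mono) auto
      ultimately show ?thesis by linarith
    qed
    show "dist (x t') (x t) < e"
    proof (cases "t' < t")
      case True
      have "dist (x t') (x t) = norm (x t - x t')" by (simp add: dist_norm norm_minus_commute)
      also have "\<dots> \<le> H * (t - t') powr \<alpha>" using b[OF t'(1) t True] .
      also have "\<dots> < e" using key True by (simp add: abs_minus_commute)
      finally show ?thesis .
    next
      case False
      show ?thesis
      proof (cases "t' = t")
        case True then show ?thesis using e by simp
      next
        case ne: False
        with False have "t < t'" by simp
        have "dist (x t') (x t) = norm (x t' - x t)" by (simp add: dist_norm)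
        also have "\<dots> \<le> H * (t' - t) powr \<alpha>" using b[OF t t'(1) \<open>t < t'\<close>] .
        also have "\<dots> < e" using key ne \<open>t < t'\<close> by simp
        finally show ?thesis .
      qed
    qed
  qed
qed

lemma holder_on_cont:
  assumes "holder_on \<alpha> a b x" "0 < \<alpha>"
  shows "continuous_on {a..b} x"
  by (rule holder_cont[OF hol_semi_ge0[OF assms(1)] assms(2)]) (use hol_semi_upper[OF assms(1)] in auto)


lemma sup_norm_scale:
  fixes h :: "real \<Rightarrow> 'a::real_normed_vector"
  assumes "continuous_on {a..b} h"
  shows "sup_norm a b (\<lambda>t. c *\<^sub>R h t) \<le> \<bar>c\<bar> * sup_norm a b h"
  by (rule sup_norm_le) (use sup_norm_ge0[OF assms] sup_norm_upper[OF assms] in \<open>auto intro: mult_left_mono\<close>)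

lemma g_lip:
  fixes g :: "(real \<Rightarrow> 'a::real_normed_vector) \<Rightarrow> 'b::real_normed_vector"
  assumes H1: "frechet_C1_Cr r g Dg"
    and H2: "\<forall>\<xi> h. in_Cr r \<xi> \<and> in_Cr r h \<longrightarrow> norm (Dg \<xi> h) \<le> L * cr_norm r h"
    and xi: "in_Cr r \<xi>" and ze: "in_Cr r \<zeta>"
  shows "norm (g \<xi> - g \<zeta>) \<le> L * cr_norm r (\<lambda>u. \<xi> u - \<zeta> u)"
proof -
  define h where "h = (\<lambda>u. \<xi> u - \<zeta> u)"
  define \<gamma> where "\<gamma> = (\<lambda>l::real. (\<lambda>u. \<zeta> u + l *\<^sub>R h u))"
  define N where "N = cr_norm r h"
  have hC: "in_Cr r h" using xi ze unfolding h_def in_Cr_def by (intro continuous_intros)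
  have gC: "in_Cr r (\<gamma> l)" for l using ze hC unfolding \<gamma>_def in_Cr_def by (intro continuous_intros)
  have N0: "0 \<le> N" unfolding N_def cr_norm_def using hC sup_norm_ge0 unfolding in_Cr_def by blast
  have deriv: "((\<lambda>l. g (\<gamma> l)) has_derivative (\<lambda>d. d *\<^sub>R Dg (\<gamma> l0) h)) (at l0 within {0..1})" for l0
    unfolding has_derivative_within_alt
  proof (intro conjI bounded_linear_scaleR_left allI impI)
    fix e :: real assume e: "0 < e"
    define e' where "e' = e / (N + 1)"
    have e': "0 < e'" using e N0 unfolding e'_def by simp
    obtain \<delta> where \<delta>: "\<delta> > 0" and fr: "\<And>h'. in_Cr r h' \<Longrightarrow> cr_norm r h' < \<delta> \<Longrightarrow>
        norm (g (\<lambda>u. \<gamma> l0 u + h' u) - g (\<gamma> l0) - Dg (\<gamma> l0) h') \<le> e' * cr_norm r h'"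
      using H1 gC[of l0] e' unfolding frechet_C1_Cr_def by meson
    have lin: "Dg (\<gamma> l0) (\<lambda>u. a *\<^sub>R h1 u + b *\<^sub>R h2 u) = a *\<^sub>R Dg (\<gamma> l0) h1 + b *\<^sub>R Dg (\<gamma> l0) h2"
      if "in_Cr r h1" "in_Cr r h2" for a b h1 h2
      using H1 gC[of l0] that unfolding frechet_C1_Cr_def by blast
    show "\<exists>d>0. \<forall>y\<in>{0..1}. norm (y - l0) < d \<longrightarrow>
        norm (g (\<gamma> y) - g (\<gamma> l0) - (y - l0) *\<^sub>R Dg (\<gamma> l0) h) \<le> e * norm (y - l0)"
    proof (intro exI[of _ "\<delta> / (N + 1)"] conjI ballI impI)
      show "0 < \<delta> / (N + 1)" using \<delta> N0 by simp
      fix y :: real assume y: "norm (y - l0) < \<delta> / (N + 1)"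
      define h' where "h' = (\<lambda>u. (y - l0) *\<^sub>R h u)"
      have h'C: "in_Cr r h'" using hC unfolding h'_def in_Cr_def by (intro continuous_intros)
      have cn: "cr_norm r h' \<le> \<bar>y - l0\<bar> * N"
        unfolding h'_def cr_norm_def N_def using sup_norm_scale hC unfolding in_Cr_def by blast
      have "\<bar>y - l0\<bar> * N \<le> \<bar>y - l0\<bar> * (N + 1)" by (intro mult_left_mono) auto
      also have "\<dots> < \<delta>" using y N0 by (simp add: field_simps)
      finally have small: "cr_norm r h' < \<delta>" using cn by linarith
      have eq1: "(\<lambda>u. \<gamma> l0 u + h' u) = \<gamma> y"
        unfolding \<gamma>_def h'_def by (rule ext) (simp add: algebra_simps)
      have eq2: "Dg (\<gamma> l0) h' = (y - l0) *\<^sub>R Dg (\<gamma> l0) h"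
        using lin[OF hC hC, of "y - l0" 0] unfolding h'_def by simp
      have "norm (g (\<gamma> y) - g (\<gamma> l0) - (y - l0) *\<^sub>R Dg (\<gamma> l0) h) \<le> e' * cr_norm r h'"
        using fr[OF h'C small] unfolding eq1 eq2 .
      also have "\<dots> \<le> e' * (\<bar>y - l0\<bar> * N)" using cn e' by (intro mult_left_mono) auto
      also have "\<dots> = \<bar>y - l0\<bar> * (e * (N / (N + 1)))" unfolding e'_def by (simp add: field_simps)
      also have "\<dots> \<le> \<bar>y - l0\<bar> * (e * 1)"
        using N0 e by (intro mult_left_mono) (auto simp: field_simps)
      finally show "norm (g (\<gamma> y) - g (\<gamma> l0) - (y - l0) *\<^sub>R Dg (\<gamma> l0) h) \<le> e * norm (y - l0)"
        by (simp add: mult.commute)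
    qed
  qed
  have on: "onorm (\<lambda>d. d *\<^sub>R Dg (\<gamma> l) h) \<le> L * N" for l
  proof -
    have "onorm (\<lambda>d::real. d *\<^sub>R Dg (\<gamma> l) h) = onorm (\<lambda>d::real. d) * norm (Dg (\<gamma> l) h)"
      by (rule onorm_scaleR_left) (rule bounded_linear_ident)
    also have "\<dots> = norm (Dg (\<gamma> l) h)" by (simp add: onorm_id)
    also have "\<dots> \<le> L * N" using H2 gC hC unfolding N_def by blast
    finally show ?thesis .
  qed
  have "norm (g (\<gamma> 1) - g (\<gamma> 0)) \<le> L * N * norm (1 - (0::real))"
    by (rule differentiable_bound[OF convex_real_interval(5) deriv on]) auto
  moreover have "\<gamma> 1 = \<xi>" "\<gamma> 0 = \<zeta>" unfolding \<gamma>_def h_def by auto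
  ultimately show ?thesis unfolding N_def h_def by simp
qed

lemma Lg_nonneg:
  fixes Dg :: "(real \<Rightarrow> 'a::euclidean_space) \<Rightarrow> (real \<Rightarrow> 'a) \<Rightarrow> 'a"
  assumes r: "r > 0" and H2: "\<forall>\<xi> h. in_Cr r \<xi> \<and> in_Cr r h \<longrightarrow> norm (Dg \<xi> h) \<le> L * cr_norm r h"
  shows "0 \<le> L"
proof -
  define b :: 'a where "b = (SOME i. i \<in> Basis)"
  have C: "in_Cr r (\<lambda>_. b)" unfolding in_Cr_def by simp
  have "norm ((\<lambda>_. b) (0::real)) \<le> cr_norm r (\<lambda>_. b)"
    unfolding cr_norm_def by (rule sup_norm_upper) (use r in auto)
  then have "1 \<le> cr_norm r (\<lambda>_. b)" unfolding b_def by simp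
  moreover have "0 \<le> L * cr_norm r (\<lambda>_. b)" using H2 C by (meson norm_ge_zero order_trans)
  ultimately show ?thesis by (simp add: zero_le_mult_iff)
qed

lemma f_bound:
  assumes H_f: "\<forall>\<xi> \<zeta>. in_Cr r \<xi> \<and> in_Cr r \<zeta> \<longrightarrow> norm (f \<xi> - f \<zeta>) \<le> L * cr_norm r (\<lambda>u. \<xi> u - \<zeta> u)"
    and xi: "in_Cr r \<xi>"
  shows "norm (f \<xi>) \<le> norm (f (\<lambda>_. 0)) + L * cr_norm r \<xi>"
proof -
  have "in_Cr r (\<lambda>_. 0)" unfolding in_Cr_def by simp
  then have "norm (f \<xi> - f (\<lambda>_. 0)) \<le> L * cr_norm r \<xi>" using H_f xi by force
  then show ?thesis using norm_triangle_ineq2[of "f \<xi>" "f (\<lambda>_. 0)"] by linarith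
qed

lemma seg_inCr:
  assumes "continuous_on {-r..T} x" "0 \<le> v" "v \<le> T"
  shows "in_Cr r (seg x v)"
  unfolding in_Cr_def seg_def
  by (rule continuous_on_compose2[OF assms(1), of _ "\<lambda>u. v + u"]) (use assms in \<open>auto intro!: continuous_intros\<close>)

lemma seg_norm:
  assumes "continuous_on {-r..t} x" "0 \<le> v" "v \<le> t"
  shows "cr_norm r (seg x v) \<le> sup_norm (-r) t x"
  unfolding cr_norm_def seg_def
  by (rule sup_norm_le) (use assms sup_norm_ge0[OF assms(1)] in \<open>auto intro!: sup_norm_upper[OF assms(1)]\<close>)

lemma seg_diff_norm:
  assumes "holder_on \<beta> (-r) t x" "0 \<le> v" "v \<le> t" "0 \<le> w" "w \<le> t"
  shows "cr_norm r (\<lambda>u. seg x v u - seg x w u) \<le> hol_semi \<beta> (-r) t x * \<bar>v - w\<bar> powr \<beta>"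
  unfolding cr_norm_def seg_def
proof (rule sup_norm_le)
  show "0 \<le> hol_semi \<beta> (-r) t x * \<bar>v - w\<bar> powr \<beta>" using hol_semi_ge0[OF assms(1)] by simp
  fix u assume u: "u \<in> {-r..0}"
  consider "v < w" | "v = w" | "w < v" by linarith
  then show "norm (x (v + u) - x (w + u)) \<le> hol_semi \<beta> (-r) t x * \<bar>v - w\<bar> powr \<beta>"
  proof cases
    case 1
    have "norm (x (v + u) - x (w + u)) = norm (x (w + u) - x (v + u))" by (rule norm_minus_commute)
    also have "\<dots> \<le> hol_semi \<beta> (-r) t x * ((w + u) - (v + u)) powr \<beta>"
      by (rule hol_semi_upper[OF assms(1)]) (use u 1 assms in auto)
    finally show ?thesis using 1 by simp
  next
    case 2 then show ?thesis using hol_semi_ge0[OF assms(1)] by simp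
  next
    case 3
    have "norm (x (v + u) - x (w + u)) \<le> hol_semi \<beta> (-r) t x * ((v + u) - (w + u)) powr \<beta>"
      by (rule hol_semi_upper[OF assms(1)]) (use u 3 assms in auto)
    then show ?thesis using 3 by simp
  qed
qed


lemma mesh_le:
  assumes "0 \<le> d" "\<And>i. i < length p - 1 \<Longrightarrow> p ! Suc i - p ! i \<le> d"
  shows "mesh p \<le> d"
proof -
  have fin: "finite {p ! Suc i - p ! i |i. i < length p - 1}" by simp
  show ?thesis unfolding mesh_def using fin assms by (auto simp: Max_le_iff)
qed

lemma sum_split_add: fixes n m :: nat shows "(\<Sum>i<m + n. f i) = (\<Sum>i<m. f i) + (\<Sum>j<n. f (m + j))"
  by (induction n) (auto simp: add.assoc)

lemma sum_split_even_odd: fixes k :: nat shows "(\<Sum>i<2 * k. f i) = (\<Sum>j<k. f (2 * j) + f (2 * j + 1))"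
proof (induction k)
  case (Suc k)
  have "2 * Suc k = Suc (Suc (2 * k))" by simp
  then show ?case using Suc by (simp add: algebra_simps)
qed simp

lemma tp_map:
  fixes \<phi> :: "nat \<Rightarrow> real"
  assumes mono: "\<And>i. i < k \<Longrightarrow> \<phi> i < \<phi> (Suc i)" and "\<phi> 0 = a" "\<phi> k = b"
  shows "tagged_partition a b (map \<phi> [0..<Suc k]) (\<lambda>i. map \<phi> [0..<Suc k] ! i)"
proof -
  have sm: "\<phi> i < \<phi> j" if "i < j" "j \<le> k" for i j
    using that
  proof (induction j)
    case (Suc j)
    then show ?case using mono[of j] by (cases "i = j") auto
  qed simp
  have "sorted_wrt (<) (map \<phi> [0..<Suc k])"
    unfolding sorted_wrt_iff_nth_less using sm
    by (auto simp del: upt_Suc simp: nth_append)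
  moreover have "last (map \<phi> [0..<Suc k]) = b" using assms by (simp del: upt_Suc add: last_map)
  moreover have "\<forall>i < length (map \<phi> [0..<Suc k]) - 1. map \<phi> [0..<Suc k] ! i \<le> map \<phi> [0..<Suc k] ! i \<and>
      map \<phi> [0..<Suc k] ! i \<le> map \<phi> [0..<Suc k] ! Suc i"
    using mono by (auto simp del: upt_Suc simp: nth_append less_imp_le)
  ultimately show ?thesis unfolding tagged_partition_def using assms
    by (simp del: upt_Suc add: hd_map)
qed

lemma rs_sum_map:
  "rs_sum Y \<omega> (map \<phi> [0..<Suc k]) (\<lambda>i. map \<phi> [0..<Suc k] ! i) =
     (\<Sum>i<k. (\<omega> (\<phi> (Suc i)) - \<omega> (\<phi> i)) *\<^sub>R Y (\<phi> i))"
  unfolding rs_sum_def by (intro sum.cong) (auto simp del: upt_Suc simp: nth_append)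

lemma mesh_map:
  assumes "0 \<le> d" "\<And>i. i < k \<Longrightarrow> \<phi> (Suc i) - \<phi> i \<le> d"
  shows "mesh (map \<phi> [0..<Suc k]) \<le> d"
  by (rule mesh_le) (use assms in \<open>auto simp del: upt_Suc simp: nth_append\<close>)


lemma pow_identity:
  fixes h \<theta> :: real and n :: nat
  assumes "h > 0"
  shows "2 ^ n * (h / 2 ^ Suc n) powr \<theta> = h powr \<theta> * 2 powr (-\<theta>) * (2 powr (1 - \<theta>)) ^ n"
proof -
  have a: "(2::real) ^ n = 2 powr real n" by (simp add: powr_realpow)
  have b: "(2::real) ^ Suc n = 2 powr real (Suc n)" by (simp add: powr_realpow del: of_nat_Suc)
  have c: "((2::real) powr (1 - \<theta>)) ^ n = 2 powr (real n * (1 - \<theta>))" by (simp add: powr_power)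
  have "2 ^ n * (h / 2 ^ Suc n) powr \<theta> = h powr \<theta> * (2 powr real n / (2 powr real (Suc n)) powr \<theta>)"
    unfolding a b by (simp add: powr_divide)
  also have "2 powr real n / (2 powr real (Suc n)) powr \<theta> = (2::real) powr (real n - real (Suc n) * \<theta>)"
    by (simp add: powr_powr powr_diff)
  also have "real n - real (Suc n) * \<theta> = -\<theta> + real n * (1 - \<theta>)" by (simp add: algebra_simps)
  also have "(2::real) powr (-\<theta> + real n * (1 - \<theta>)) = 2 powr (-\<theta>) * (2 powr (1 - \<theta>)) ^ n"
    unfolding c powr_add by (rule refl)
  finally show ?thesis by simp
qed

lemma dyadic_bound:
  fixes Y :: "real \<Rightarrow> 'a::real_normed_vector" and \<omega> :: "real \<Rightarrow> real"
  assumes h: "h > 0" and Ay: "0 \<le> Ay" and Aw: "0 \<le> Aw" and th: "\<beta> + \<nu> > 1"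
    and Hy: "\<And>v w. v \<in> {s..s+h} \<Longrightarrow> w \<in> {s..s+h} \<Longrightarrow> norm (Y v - Y w) \<le> Ay * \<bar>v - w\<bar> powr \<beta>"
    and Hw: "\<And>v w. v \<in> {s..s+h} \<Longrightarrow> w \<in> {s..s+h} \<Longrightarrow> \<bar>\<omega> v - \<omega> w\<bar> \<le> Aw * \<bar>v - w\<bar> powr \<nu>"
  shows "norm ((\<Sum>j<2^n. (\<omega> (s + h * real (Suc j) / 2^n) - \<omega> (s + h * real j / 2^n)) *\<^sub>R Y (s + h * real j / 2^n))
           - (\<omega> (s + h) - \<omega> s) *\<^sub>R Y s)
         \<le> Ay * Aw * h powr (\<beta> + \<nu>) / (1 - 2 powr (1 - (\<beta> + \<nu>)))"
proof -
  define \<theta> where "\<theta> = \<beta> + \<nu>"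
  define q :: real where "q = 2 powr (1 - \<theta>)"
  define xx where "xx = (\<lambda>(n::nat) (j::nat). s + h * real j / 2^n)"
  define D where "D = (\<lambda>n. \<Sum>j<2^n. (\<omega> (xx n (Suc j)) - \<omega> (xx n j)) *\<^sub>R Y (xx n j))"
  have q0: "0 \<le> q" unfolding q_def by simp
  have q1: "q < 1" unfolding q_def \<theta>_def using th powr_less_cancel_iff[of "2::real" "1 - (\<beta> + \<nu>)" 0] by simp
  have xx_in: "xx n j \<in> {s..s+h}" if "j \<le> 2^n" for n j
  proof -
    have "real j / 2^n \<le> 1" using that by (simp add: field_simps)
    then have "h * (real j / 2^n) \<le> h * 1" using h by (intro mult_left_mono) auto
    then show ?thesis unfolding xx_def using h by auto
  qed
  have step: "norm (D (Suc n) - D n) \<le> Ay * Aw * (h powr \<theta> * 2 powr (-\<theta>) * q ^ n)" for n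
  proof -
    define e where "e = h / 2 ^ Suc n"
    have e0: "e > 0" using h unfolding e_def by simp
    define b where "b = (\<lambda>j. xx (Suc n) (2 * j + 1))"
    have x2: "xx (Suc n) (2 * j) = xx n j" for j unfolding xx_def by (simp add: field_simps)
    have x3: "xx (Suc n) (Suc (2 * j + 1)) = xx n (Suc j)" for j unfolding xx_def by (simp add: field_simps)
    have bm: "b j - xx n j = e" "xx n (Suc j) - b j = e" for j
      unfolding b_def xx_def e_def by (simp_all add: field_simps)
    have "D (Suc n) = (\<Sum>i<2 * 2^n. (\<omega> (xx (Suc n) (Suc i)) - \<omega> (xx (Suc n) i)) *\<^sub>R Y (xx (Suc n) i))"
      unfolding D_def by simp
    also have "\<dots> = (\<Sum>j<2^n. (\<omega> (b j) - \<omega> (xx n j)) *\<^sub>R Y (xx n j)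
                      + (\<omega> (xx n (Suc j)) - \<omega> (b j)) *\<^sub>R Y (b j))"
      unfolding sum_split_even_odd b_def
      by (intro sum.cong refl) (metis x2 x3 Suc_eq_plus1 mult_Suc_right)
    finally have "D (Suc n) - D n = (\<Sum>j<2^n. (\<omega> (xx n (Suc j)) - \<omega> (b j)) *\<^sub>R (Y (b j) - Y (xx n j)))"
      unfolding D_def by (simp add: sum_subtractf[symmetric] algebra_simps)
    also have "norm \<dots> \<le> (\<Sum>j<(2::nat)^n. Aw * e powr \<nu> * (Ay * e powr \<beta>))"
    proof (rule order_trans[OF norm_sum sum_mono])
      fix j :: nat assume j: "j \<in> {..<2^n}"
      have in1: "xx n j \<in> {s..s+h}" "xx n (Suc j) \<in> {s..s+h}" using xx_in j by auto
      have in2: "b j \<in> {s..s+h}" using in1 bm[of j] e0 by auto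
      have "norm ((\<omega> (xx n (Suc j)) - \<omega> (b j)) *\<^sub>R (Y (b j) - Y (xx n j)))
          = \<bar>\<omega> (xx n (Suc j)) - \<omega> (b j)\<bar> * norm (Y (b j) - Y (xx n j))" by simp
      also have "\<dots> \<le> (Aw * \<bar>xx n (Suc j) - b j\<bar> powr \<nu>) * (Ay * \<bar>b j - xx n j\<bar> powr \<beta>)"
        by (intro mult_mono Hw Hy in1 in2) (use Aw in auto)
      finally show "norm ((\<omega> (xx n (Suc j)) - \<omega> (b j)) *\<^sub>R (Y (b j) - Y (xx n j)))
          \<le> Aw * e powr \<nu> * (Ay * e powr \<beta>)" using bm[of j] e0 by simp
    qed
    also have "\<dots> = Ay * Aw * (2 ^ n * e powr \<theta>)"
      unfolding \<theta>_def using e0 by (simp add: powr_add algebra_simps)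
    also have "2 ^ n * e powr \<theta> = h powr \<theta> * 2 powr (-\<theta>) * q ^ n"
      unfolding e_def q_def by (rule pow_identity[OF h])
    finally show ?thesis .
  qed
  have D0: "D 0 = (\<omega> (s + h) - \<omega> s) *\<^sub>R Y s" unfolding D_def xx_def by simp
  have "norm (D n - D 0) = norm (\<Sum>j<n. D (Suc j) - D j)" by (simp add: sum_lessThan_telescope)
  also have "\<dots> \<le> (\<Sum>j<n. Ay * Aw * (h powr \<theta> * 2 powr (-\<theta>) * q ^ j))"
    by (rule order_trans[OF norm_sum sum_mono]) (rule step)
  also have "\<dots> = Ay * Aw * h powr \<theta> * 2 powr (-\<theta>) * (\<Sum>j<n. q ^ j)"
    unfolding sum_distrib_left by (rule sum.cong) (simp_all add: mult_ac)
  also have "\<dots> \<le> Ay * Aw * h powr \<theta> * 1 * (1 / (1 - q))"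
  proof (intro mult_mono)
    have "(\<Sum>j<n. q ^ j) = (1 - q ^ n) / (1 - q)" using q1 by (simp add: sum_gp_strict)
    also have "\<dots> \<le> 1 / (1 - q)" using q0 q1 by (intro divide_right_mono) auto
    finally show "(\<Sum>j<n. q ^ j) \<le> 1 / (1 - q)" .
    have "(2::real) powr (-\<theta>) \<le> 2 powr 0" by (rule powr_mono) (use th in \<open>auto simp: \<theta>_def\<close>)
    then show "2 powr (-\<theta>) \<le> (1::real)" by simp
  qed (use Ay Aw q0 in \<open>auto intro!: sum_nonneg\<close>)
  finally show ?thesis unfolding D_def xx_def D0[unfolded D_def xx_def] q_def \<theta>_def
    by (simp add: add.commute)
qed


lemma young_est:
  fixes Y :: "real \<Rightarrow> 'a::real_normed_vector" and \<omega> :: "real \<Rightarrow> real"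
  assumes Iu: "has_young_integral Y \<omega> 0 u Iu" and Is: "has_young_integral Y \<omega> 0 s Is"
    and s: "0 \<le> s" "s < u" and Ay: "0 \<le> Ay" and Aw: "0 \<le> Aw" and th: "\<beta> + \<nu> > 1"
    and Hy: "\<And>v w. v \<in> {s..u} \<Longrightarrow> w \<in> {s..u} \<Longrightarrow> norm (Y v - Y w) \<le> Ay * \<bar>v - w\<bar> powr \<beta>"
    and Hw: "\<And>v w. v \<in> {s..u} \<Longrightarrow> w \<in> {s..u} \<Longrightarrow> \<bar>\<omega> v - \<omega> w\<bar> \<le> Aw * \<bar>v - w\<bar> powr \<nu>"
  shows "norm (Iu - Is - (\<omega> u - \<omega> s) *\<^sub>R Y s)
           \<le> Ay * Aw * (u - s) powr (\<beta> + \<nu>) / (1 - 2 powr (1 - (\<beta> + \<nu>)))"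
proof -
  define h where "h = u - s"
  have h: "h > 0" "s + h = u" using s unfolding h_def by auto
  define Kb where "Kb = Ay * Aw * (u - s) powr (\<beta> + \<nu>) / (1 - 2 powr (1 - (\<beta> + \<nu>)))"
  define Dn where "Dn = (\<lambda>n::nat. \<Sum>j<2^n. (\<omega> (s + h * real (Suc j) / 2^n) - \<omega> (s + h * real j / 2^n)) *\<^sub>R Y (s + h * real j / 2^n))"
  have dy: "norm (Dn n - (\<omega> u - \<omega> s) *\<^sub>R Y s) \<le> Kb" for n
    using dyadic_bound[of h Ay Aw \<beta> \<nu> s Y \<omega> n] h Ay Aw th Hy Hw unfolding Dn_def Kb_def h_def
    by simp
  show ?thesis unfolding Kb_def[symmetric]
  proof (rule field_le_epsilon)
    fix e :: real assume e: "0 < e"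
    obtain \<delta>1 where d1: "\<delta>1 > 0" and I1: "\<And>p \<tau>. tagged_partition 0 u p \<tau> \<Longrightarrow> mesh p < \<delta>1 \<Longrightarrow>
        norm (rs_sum Y \<omega> p \<tau> - Iu) < e / 2"
      using Iu e unfolding has_young_integral_def by (meson half_gt_zero)
    obtain \<delta>2 where d2: "\<delta>2 > 0" and I2: "\<And>p \<tau>. tagged_partition 0 s p \<tau> \<Longrightarrow> mesh p < \<delta>2 \<Longrightarrow>
        norm (rs_sum Y \<omega> p \<tau> - Is) < e / 2"
      using Is e unfolding has_young_integral_def by (meson half_gt_zero)
    define \<delta> where "\<delta> = min \<delta>1 \<delta>2"
    have d: "\<delta> > 0" using d1 d2 unfolding \<delta>_def by simp
    obtain n :: nat where n: "h / \<delta> < 2 ^ n" using real_arch_pow[of 2 "h / \<delta>"] by auto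
    have hn: "h / 2 ^ n < \<delta>" using n d by (simp add: field_simps)
    obtain m :: nat where m0: "m = 0 \<longleftrightarrow> s = 0" and mb: "s / real m < \<delta>"
    proof (cases "s = 0")
      case True then show ?thesis using that[of 0] d by simp
    next
      case False
      obtain m :: nat where "s / \<delta> < real m" using reals_Archimedean2 by blast
      moreover have "0 < s / \<delta>" using False s d by simp
      ultimately have mpos: "real m > 0" by linarith
      have "s / real m < \<delta>" using \<open>s / \<delta> < real m\<close> mpos d by (simp add: field_simps)
      moreover have "m > 0" using mpos by simp
      ultimately have "m > 0" "s / real m < \<delta>" by auto
      then show ?thesis using that[of m] False by simp
    qed
    define \<psi> where "\<psi> = (\<lambda>i::nat. s * real i / real m)"
    define Q where "Q = map \<psi> [0..<Suc m]"
    have psim: "\<psi> m = s" unfolding \<psi>_def using m0 by (cases "m = 0") auto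
    have Qtp: "tagged_partition 0 s Q (\<lambda>i. Q ! i)" unfolding Q_def
    proof (rule tp_map)
      fix i assume "i < m"
      then have "m > 0" "s > 0" using m0 s by auto
      then show "\<psi> i < \<psi> (Suc i)" unfolding \<psi>_def by (simp add: field_simps)
    qed (use m0 in \<open>auto simp: \<psi>_def psim\<close>)
    have Qm: "mesh Q < \<delta>2"
    proof -
      have "mesh Q \<le> s / real m" unfolding Q_def
        by (rule mesh_map) (use s in \<open>auto simp: \<psi>_def field_simps\<close>)
      then show ?thesis using mb unfolding \<delta>_def by linarith
    qed
    define \<phi> where "\<phi> = (\<lambda>i::nat. if i \<le> m then \<psi> i else s + h * real (i - m) / 2 ^ n)"
    have phi_hi: "\<phi> i = s + h * real (i - m) / 2 ^ n" if "m \<le> i" for i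
      using that psim unfolding \<phi>_def by (cases "i = m") auto
    have phi_lo: "\<phi> i = \<psi> i" if "i \<le> m" for i using that unfolding \<phi>_def by simp
    define k where "k = m + 2 ^ n"
    define L where "L = map \<phi> [0..<Suc k]"
    have Ltp: "tagged_partition 0 u L (\<lambda>i. L ! i)" unfolding L_def
    proof (rule tp_map)
      fix i assume "i < k"
      show "\<phi> i < \<phi> (Suc i)"
      proof (cases "Suc i \<le> m")
        case True
        then have "m > 0" "s > 0" using m0 s by auto
        moreover have "\<phi> i = \<psi> i" "\<phi> (Suc i) = \<psi> (Suc i)" using True phi_lo by auto
        moreover have "\<psi> i < \<psi> (Suc i)" unfolding \<psi>_def using \<open>m > 0\<close> \<open>s > 0\<close> by (simp add: field_simps)
        ultimately show ?thesis by simp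
      next
        case False
        then have "m \<le> i" by simp
        then have "Suc i - m = Suc (i - m)" by simp
        then have "\<phi> (Suc i) - \<phi> i = h / 2 ^ n" using phi_hi[of i] phi_hi[of "Suc i"] \<open>m \<le> i\<close>
          by (simp add: field_simps)
        moreover have "h / 2 ^ n > 0" using h by simp
        ultimately show ?thesis by linarith
      qed
    next
      show "\<phi> 0 = 0" unfolding \<phi>_def \<psi>_def by simp
      show "\<phi> k = u" using phi_hi[of k] h unfolding k_def by simp
    qed
    have Lm: "mesh L < \<delta>1"
    proof -
      have "mesh L \<le> max (s / real m) (h / 2 ^ n)" unfolding L_def
      proof (rule mesh_map)
        show "0 \<le> max (s / real m) (h / 2 ^ n)" using h by (auto simp: le_max_iff_disj)
        fix i assume "i < k"
        show "\<phi> (Suc i) - \<phi> i \<le> max (s / real m) (h / 2 ^ n)"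
        proof (cases "Suc i \<le> m")
          case True
          moreover have "\<phi> i = \<psi> i" "\<phi> (Suc i) = \<psi> (Suc i)" using True phi_lo by auto
          moreover have "\<psi> (Suc i) - \<psi> i = s / real m" unfolding \<psi>_def by (simp add: add_divide_distrib algebra_simps)
          ultimately show ?thesis by (simp add: le_max_iff_disj)
        next
          case False
          then have "m \<le> i" by simp
          then have "Suc i - m = Suc (i - m)" by simp
          then have "\<phi> (Suc i) - \<phi> i = h / 2 ^ n" using phi_hi[of i] phi_hi[of "Suc i"] \<open>m \<le> i\<close>
            by (simp add: field_simps)
          then show ?thesis by simp
        qed
      qed
      moreover have "max (s / real m) (h / 2 ^ n) < \<delta>" using mb hn by simp
      ultimately show ?thesis unfolding \<delta>_def by linarith
    qed
    have split: "rs_sum Y \<omega> L (\<lambda>i. L ! i) = rs_sum Y \<omega> Q (\<lambda>i. Q ! i) + Dn n"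
    proof -
      have "rs_sum Y \<omega> L (\<lambda>i. L ! i) = (\<Sum>i<m + 2^n. (\<omega> (\<phi> (Suc i)) - \<omega> (\<phi> i)) *\<^sub>R Y (\<phi> i))"
        unfolding L_def rs_sum_map k_def ..
      also have "\<dots> = (\<Sum>i<m. (\<omega> (\<phi> (Suc i)) - \<omega> (\<phi> i)) *\<^sub>R Y (\<phi> i))
                  + (\<Sum>j<2^n. (\<omega> (\<phi> (Suc (m + j))) - \<omega> (\<phi> (m + j))) *\<^sub>R Y (\<phi> (m + j)))"
        by (simp add: sum_split_add)
      also have "(\<Sum>i<m. (\<omega> (\<phi> (Suc i)) - \<omega> (\<phi> i)) *\<^sub>R Y (\<phi> i)) = rs_sum Y \<omega> Q (\<lambda>i. Q ! i)"
        unfolding Q_def rs_sum_map by (intro sum.cong) (auto simp: phi_lo)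
      also have "(\<Sum>j<2^n. (\<omega> (\<phi> (Suc (m + j))) - \<omega> (\<phi> (m + j))) *\<^sub>R Y (\<phi> (m + j))) = Dn n"
        unfolding Dn_def by (intro sum.cong) (auto simp: phi_hi)
      finally show ?thesis .
    qed
    have a1: "norm (rs_sum Y \<omega> L (\<lambda>i. L ! i) - Iu) < e / 2" by (rule I1[OF Ltp Lm])
    have a2: "norm (rs_sum Y \<omega> Q (\<lambda>i. Q ! i) - Is) < e / 2" by (rule I2[OF Qtp Qm])
    have "Iu - Is - (\<omega> u - \<omega> s) *\<^sub>R Y s = (rs_sum Y \<omega> Q (\<lambda>i. Q ! i) - Is)
          - (rs_sum Y \<omega> L (\<lambda>i. L ! i) - Iu) + (Dn n - (\<omega> u - \<omega> s) *\<^sub>R Y s)"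
      unfolding split by (simp add: algebra_simps)
    also have "norm \<dots> \<le> norm (rs_sum Y \<omega> Q (\<lambda>i. Q ! i) - Is) + norm (rs_sum Y \<omega> L (\<lambda>i. L ! i) - Iu)
          + norm (Dn n - (\<omega> u - \<omega> s) *\<^sub>R Y s)"
      by (rule order_trans[OF norm_triangle_ineq add_right_mono]) (rule norm_triangle_ineq4)
    finally show "norm (Iu - Is - (\<omega> u - \<omega> s) *\<^sub>R Y s) \<le> Kb + e" using a1 a2 dy[of n] by linarith
  qed
qed


lemma power_sum_le:
  fixes a b :: real
  assumes "0 \<le> a" "0 \<le> b" "1 \<le> k"
  shows "(a + b) ^ k \<le> 2 ^ (k - 1) * (a ^ k + b ^ k)"
  using assms(3)
proof (induction k rule: dec_induct)
  case base then show ?case by simp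
next
  case (step k)
  have key: "(a + b) * (a ^ k + b ^ k) \<le> 2 * (a ^ Suc k + b ^ Suc k)"
  proof -
    have "0 \<le> (a - b) * (a ^ k - b ^ k)"
    proof (cases "a \<le> b")
      case True
      then have "a ^ k \<le> b ^ k" using assms by (intro power_mono) auto
      then show ?thesis using True by (intro mult_nonpos_nonpos) auto
    next
      case False
      then have "b ^ k \<le> a ^ k" using assms by (intro power_mono) auto
      then show ?thesis using False by (intro mult_nonneg_nonneg) auto
    qed
    then show ?thesis by (simp add: algebra_simps)
  qed
  have "(a + b) ^ Suc k = (a + b) * (a + b) ^ k" by simp
  also have "\<dots> \<le> (a + b) * (2 ^ (k - 1) * (a ^ k + b ^ k))"
    using step.IH assms by (intro mult_left_mono) auto
  also have "\<dots> = 2 ^ (k - 1) * ((a + b) * (a ^ k + b ^ k))" by (simp add: algebra_simps)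
  also have "\<dots> \<le> 2 ^ (k - 1) * (2 * (a ^ Suc k + b ^ Suc k))" by (intro mult_left_mono key) auto
  also have "\<dots> = 2 ^ (Suc k - 1) * (a ^ Suc k + b ^ Suc k)"
    using step.hyps by (cases k) auto
  finally show ?case .
qed

lemma mul_powr:
  fixes T p :: real
  assumes "0 < T"
  shows "T * T powr (p - 1) = T powr p"
proof -
  have "T powr p = T powr (1 + (p - 1))" by simp
  also have "\<dots> = T powr 1 * T powr (p - 1)" by (rule powr_add)
  finally show ?thesis using assms by simp
qed

lemma powr_le_lin:
  fixes d T p :: real
  assumes "0 \<le> d" "d \<le> T" "1 \<le> p"
  shows "d powr p \<le> d * T powr (p - 1)"
proof (cases "d = 0")
  case False
  then have "d powr p = d * d powr (p - 1)" using assms mul_powr[of d p] by simp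
  also have "\<dots> \<le> d * T powr (p - 1)" using assms by (intro mult_left_mono powr_mono2) auto
  finally show ?thesis .
qed simp

lemma cont_powr_shift:
  fixes a b T p :: real
  assumes "a \<le> b" "0 < p"
  shows "continuous_on {b..T} (\<lambda>t. (t - a) powr p)"
proof -
  have cd: "continuous_on {b..T} (\<lambda>t. t - a)" by (intro continuous_on_diff continuous_on_id continuous_on_const)
  have "\<forall>t\<in>{b..T}. 0 \<le> t - a \<and> (t - a = 0 \<longrightarrow> 0 < p)" using assms by auto
  then show ?thesis by (rule continuous_on_powr'[OF cd continuous_on_const])
qed

context
  fixes C \<mu> \<beta> \<nu> T :: real and \<omega> :: "real \<Rightarrow> real"
  assumes C: "0 < C" and mu: "0 < \<mu>" "\<mu> < C" and beta: "0 < \<beta>" "\<beta> < \<nu>" "\<nu> \<le> 1"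
    and T: "0 < T" and om: "holder_on \<nu> 0 T \<omega>"
begin

definition Phi :: "real \<Rightarrow> real \<Rightarrow> real" where
  "Phi a t = C * ((t - a) powr (1 - \<beta>) + (t - a) powr (\<nu> - \<beta>) * hol_semi \<nu> a t \<omega>)"

abbreviation "\<tau> \<equiv> stop_time C \<mu> \<beta> \<nu> \<omega> T"

definition Aset :: "nat \<Rightarrow> real set" where
  "Aset i = {t \<in> {\<tau> i..T}. Phi (\<tau> i) t \<le> \<mu>}"

lemma tau_Suc: "\<tau> (Suc i) = Sup (Aset i)"
  unfolding Aset_def Phi_def by (simp add: Let_def)

lemma Phi_self: "Phi a a = 0"
  unfolding Phi_def by simp

lemma Phi_mono:
  assumes "0 \<le> a" "a \<le> u" "u \<le> t" "t \<le> T"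
  shows "Phi a u \<le> Phi a t"
proof -
  have om': "holder_on \<nu> a t \<omega>" by (rule holder_on_subset[OF om]) (use assms in auto)
  have h1: "hol_semi \<nu> a u \<omega> \<le> hol_semi \<nu> a t \<omega>" by (rule hol_semi_mono[OF om']) (use assms in auto)
  have h0: "0 \<le> hol_semi \<nu> a u \<omega>" by (rule hol_semi_ge0) (rule holder_on_subset[OF om]; use assms in auto)
  have p1: "(u - a) powr (1 - \<beta>) \<le> (t - a) powr (1 - \<beta>)" using assms beta by (intro powr_mono2) auto
  have p2: "(u - a) powr (\<nu> - \<beta>) \<le> (t - a) powr (\<nu> - \<beta>)" using assms beta by (intro powr_mono2) auto
  have "(u - a) powr (\<nu> - \<beta>) * hol_semi \<nu> a u \<omega> \<le> (t - a) powr (\<nu> - \<beta>) * hol_semi \<nu> a t \<omega>"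
    using p2 h1 h0 by (intro mult_mono) auto
  then show ?thesis unfolding Phi_def using p1 C by (intro mult_left_mono) auto
qed

lemma tau_props: "0 \<le> \<tau> i \<and> \<tau> i \<le> T \<and> \<tau> i \<le> \<tau> (Suc i)"
proof (induction i)
  have base: "0 \<le> \<tau> i \<and> \<tau> i \<le> T \<Longrightarrow> \<tau> i \<le> \<tau> (Suc i) \<and> \<tau> (Suc i) \<le> T" for i
  proof -
    assume a: "0 \<le> \<tau> i \<and> \<tau> i \<le> T"
    have mem: "\<tau> i \<in> Aset i" unfolding Aset_def using a Phi_self mu by auto
    have bdd: "bdd_above (Aset i)" unfolding Aset_def by (rule bdd_aboveI[of _ T]) auto
    have "\<tau> i \<le> Sup (Aset i)" by (rule cSup_upper[OF mem bdd])
    moreover have "Sup (Aset i) \<le> T" by (rule cSup_least) (use mem in \<open>auto simp: Aset_def\<close>)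
    ultimately show ?thesis unfolding tau_Suc by simp
  qed
  {
    case 0 show ?case using base[of 0] T by simp
  next
    case (Suc i)
    then show ?case using base[of i] base[of "Suc i"] by auto
  }
qed

lemma tau_mono: "i \<le> j \<Longrightarrow> \<tau> i \<le> \<tau> j"
proof (induction j rule: dec_induct)
  case (step j) then show ?case using tau_props[of j] by linarith
qed simp

lemma tau_Phi:
  assumes "\<tau> i \<le> u" "u < \<tau> (Suc i)"
  shows "Phi (\<tau> i) u \<le> \<mu>"
proof -
  have mem: "\<tau> i \<in> Aset i" unfolding Aset_def using tau_props[of i] Phi_self mu by auto
  obtain t' where t': "t' \<in> Aset i" "u < t'"
    using less_cSupD[of "Aset i" u] mem assms(2) unfolding tau_Suc by blast
  have "Phi (\<tau> i) u \<le> Phi (\<tau> i) t'"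
    by (rule Phi_mono) (use t' assms tau_props[of i] in \<open>auto simp: Aset_def\<close>)
  also have "\<dots> \<le> \<mu>" using t' unfolding Aset_def by auto
  finally show ?thesis .
qed

lemma tau_gap:
  assumes "\<tau> (Suc i) < T"
  shows "\<mu> \<le> C * ((\<tau> (Suc i) - \<tau> i) powr (1 - \<beta>) + (\<tau> (Suc i) - \<tau> i) powr (\<nu> - \<beta>) * hol_semi \<nu> 0 T \<omega>)"
proof -
  define W where "W = hol_semi \<nu> 0 T \<omega>"
  define G where "G = (\<lambda>t. C * ((t - \<tau> i) powr (1 - \<beta>) + (t - \<tau> i) powr (\<nu> - \<beta>) * W))"
  have bdd: "bdd_above (Aset i)" unfolding Aset_def by (rule bdd_aboveI[of _ T]) auto
  have gt: "\<mu> \<le> G t" if t: "t \<in> {\<tau> (Suc i)<..T}" for t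
  proof -
    have "t \<notin> Aset i"
    proof
      assume "t \<in> Aset i"
      then have "t \<le> \<tau> (Suc i)" unfolding tau_Suc by (rule cSup_upper[OF _ bdd])
      then show False using t by simp
    qed
    moreover have "\<tau> i \<le> t" using t tau_props[of i] by auto
    ultimately have "\<mu> < Phi (\<tau> i) t" using t unfolding Aset_def by auto
    also have "Phi (\<tau> i) t \<le> G t"
    proof -
      have "hol_semi \<nu> (\<tau> i) t \<omega> \<le> W" unfolding W_def
        by (rule hol_semi_mono[OF om]) (use t tau_props[of i] in auto)
      then have "(t - \<tau> i) powr (\<nu> - \<beta>) * hol_semi \<nu> (\<tau> i) t \<omega> \<le> (t - \<tau> i) powr (\<nu> - \<beta>) * W"
        by (intro mult_left_mono) auto
      then show ?thesis unfolding Phi_def G_def using C by (intro mult_left_mono) auto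
    qed
    finally show ?thesis by simp
  qed
  have c1: "continuous_on {\<tau> (Suc i)..T} (\<lambda>t. (t - \<tau> i) powr (1 - \<beta>))"
    by (rule cont_powr_shift) (use tau_props[of i] beta in auto)
  have c2: "continuous_on {\<tau> (Suc i)..T} (\<lambda>t. (t - \<tau> i) powr (\<nu> - \<beta>))"
    by (rule cont_powr_shift) (use tau_props[of i] beta in auto)
  have cont: "continuous_on {\<tau> (Suc i)..T} G"
    unfolding G_def by (intro continuous_on_mult continuous_on_add continuous_on_const c1 c2)
  have cl: "closure {\<tau> (Suc i)<..T} = {\<tau> (Suc i)..T}" using assms by simp
  have "\<mu> \<le> G (\<tau> (Suc i))"
  proof (rule continuous_ge_on_closure[of "{\<tau> (Suc i)<..T}" G])
    show "continuous_on (closure {\<tau> (Suc i)<..T}) G" unfolding cl by (rule cont)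
    show "\<tau> (Suc i) \<in> closure {\<tau> (Suc i)<..T}" unfolding cl using assms by simp
    fix t assume "t \<in> {\<tau> (Suc i)<..T}" then show "\<mu> \<le> G t" by (rule gt)
  qed
  then show ?thesis unfolding G_def W_def .
qed

lemma count_bound:
  assumes m: "\<tau> m < T" and k: "1 \<le> k" "1 \<le> real k * (\<nu> - \<beta>)"
  shows "real m * (\<mu> / C) ^ k \<le> 2 ^ (k - 1) * (T powr (real k * (1 - \<beta>)) + T powr (real k * (\<nu> - \<beta>)) * hol_semi \<nu> 0 T \<omega> ^ k)"
proof -
  define W where "W = hol_semi \<nu> 0 T \<omega>"
  have W0: "0 \<le> W" unfolding W_def by (rule hol_semi_ge0[OF om])
  define p1 where "p1 = real k * (1 - \<beta>)"
  define p2 where "p2 = real k * (\<nu> - \<beta>)"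
  have p2: "1 \<le> p2" using k unfolding p2_def by simp
  have p1: "1 \<le> p1"
  proof -
    have "real k * (\<nu> - \<beta>) \<le> real k * (1 - \<beta>)" using beta by (intro mult_left_mono) auto
    then show ?thesis using p2 unfolding p1_def p2_def by simp
  qed
  define Bd where "Bd = 2 ^ (k - 1) * (T powr (p1 - 1) + T powr (p2 - 1) * W ^ k)"
  have each: "(\<mu> / C) ^ k \<le> (\<tau> (Suc j) - \<tau> j) * Bd" if j: "j < m" for j
  proof -
    define d where "d = \<tau> (Suc j) - \<tau> j"
    have lt: "\<tau> (Suc j) < T" using tau_mono[of "Suc j" m] j m by auto
    have g: "\<mu> \<le> C * (d powr (1 - \<beta>) + d powr (\<nu> - \<beta>) * W)"
      using tau_gap[OF lt] unfolding d_def W_def .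
    have d0: "0 \<le> d" using tau_props[of j] unfolding d_def by simp
    have dT: "d \<le> T" using tau_props[of j] tau_props[of "Suc j"] unfolding d_def by simp
    have dpos: "0 < d"
    proof (rule ccontr)
      assume "\<not> 0 < d" then have "d = 0" using d0 by simp
      then show False using g mu by simp
    qed
    have "\<mu> / C \<le> d powr (1 - \<beta>) + d powr (\<nu> - \<beta>) * W" using g C by (simp add: field_simps)
    then have "(\<mu> / C) ^ k \<le> (d powr (1 - \<beta>) + d powr (\<nu> - \<beta>) * W) ^ k"
      using mu C by (intro power_mono) auto
    also have "\<dots> \<le> 2 ^ (k - 1) * ((d powr (1 - \<beta>)) ^ k + (d powr (\<nu> - \<beta>) * W) ^ k)"
      by (rule power_sum_le) (use W0 k in auto)
    also have "(d powr (1 - \<beta>)) ^ k = d powr p1" unfolding p1_def using dpos by (simp add: powr_power)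
    also have "(d powr (\<nu> - \<beta>) * W) ^ k = d powr p2 * W ^ k"
      unfolding p2_def using dpos by (simp add: powr_power power_mult_distrib)
    also have "2 ^ (k - 1) * (d powr p1 + d powr p2 * W ^ k) \<le> 2 ^ (k - 1) * (d * T powr (p1 - 1) + d * T powr (p2 - 1) * W ^ k)"
      using powr_le_lin[OF d0 dT p1] powr_le_lin[OF d0 dT p2] W0
      by (intro mult_left_mono add_mono mult_right_mono) auto
    also have "\<dots> = d * Bd" unfolding Bd_def by (simp add: algebra_simps)
    finally show ?thesis unfolding d_def .
  qed
  have "real m * (\<mu> / C) ^ k = (\<Sum>j<m. (\<mu> / C) ^ k)" by (simp only: sum_constant card_lessThan)
  also have "\<dots> \<le> (\<Sum>j<m. (\<tau> (Suc j) - \<tau> j) * Bd)" by (rule sum_mono, rule each, simp)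
  also have "\<dots> = (\<tau> m - \<tau> 0) * Bd" by (simp only: sum_distrib_right[symmetric] sum_lessThan_telescope)
  also have "\<dots> \<le> T * Bd"
  proof (rule mult_right_mono)
    show "\<tau> m - \<tau> 0 \<le> T" using tau_props[of m] tau_props[of 0] by linarith
    show "0 \<le> Bd" unfolding Bd_def using W0 by (intro mult_nonneg_nonneg add_nonneg_nonneg) auto
  qed
  also have "T * Bd = 2 ^ (k - 1) * (T * T powr (p1 - 1) + T * T powr (p2 - 1) * W ^ k)"
    unfolding Bd_def by (simp only: distrib_left mult.assoc mult.commute mult.left_commute)
  also have "T * T powr (p1 - 1) = T powr p1" using T by (rule mul_powr)
  also have "T * T powr (p2 - 1) = T powr p2" using T by (rule mul_powr)
  finally show ?thesis unfolding p1_def p2_def W_def .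
qed

end


lemma hol_abs:
  assumes "holder_on \<alpha> a b y" "v \<in> {a..b}" "w \<in> {a..b}"
  shows "norm (y v - y w) \<le> hol_semi \<alpha> a b y * \<bar>v - w\<bar> powr \<alpha>"
proof -
  consider "v < w" | "v = w" | "w < v" by linarith
  then show ?thesis
  proof cases
    case 1
    have "norm (y v - y w) = norm (y w - y v)" by (rule norm_minus_commute)
    also have "\<dots> \<le> hol_semi \<alpha> a b y * (w - v) powr \<alpha>" by (rule hol_semi_upper) (use assms 1 in auto)
    finally show ?thesis using 1 by simp
  next
    case 2 then show ?thesis using hol_semi_ge0[OF assms(1)] by simp
  next
    case 3
    have "norm (y v - y w) \<le> hol_semi \<alpha> a b y * (v - w) powr \<alpha>" by (rule hol_semi_upper) (use assms 3 in auto)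
    then show ?thesis using 3 by simp
  qed
qed

locale setting =
  fixes r T \<nu> \<beta> L_f L_g \<mu> :: real
    and \<omega> :: "real \<Rightarrow> real"
    and f g :: "(real \<Rightarrow> 'a::euclidean_space) \<Rightarrow> 'a"
    and Dg :: "(real \<Rightarrow> 'a) \<Rightarrow> (real \<Rightarrow> 'a) \<Rightarrow> 'a"
    and \<eta> x :: "real \<Rightarrow> 'a"
  assumes r_pos: "r > 0" and T_pos: "T > 0"
    and nu: "\<nu> \<le> 1"
    and omega_hol: "holder_on \<nu> 0 T \<omega>"
    and beta: "0 < \<beta>" "\<beta> < \<nu>" "\<beta> + \<nu> > 1"
    and H_f: "\<forall>\<xi> \<zeta>. in_Cr r \<xi> \<and> in_Cr r \<zeta> \<longrightarrow>
                 norm (f \<xi> - f \<zeta>) \<le> L_f * cr_norm r (\<lambda>u. \<xi> u - \<zeta> u)"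
    and H_g1: "frechet_C1_Cr r g Dg"
    and H_g2: "\<forall>\<xi> h. in_Cr r \<xi> \<and> in_Cr r h \<longrightarrow> norm (Dg \<xi> h) \<le> L_g * cr_norm r h"
    and x_hol: "holder_on \<beta> (-r) T x"
    and x_init: "\<forall>u\<in>{-r..0}. x u = \<eta> u"
    and x_sol: "\<forall>t\<in>{0..T}. \<exists>I. has_young_integral (\<lambda>s. g (seg x s)) \<omega> 0 t I \<and>
                  x t = \<eta> 0 + integral {0..t} (\<lambda>s. f (seg x s)) + I"
    and mu: "0 < \<mu>" "\<mu> < min 1 (2 * (norm (g (\<lambda>_. 0)) + max L_f (norm (f (\<lambda>_. 0)))
                         + L_g * (1 / (1 - 2 powr (1 - (\<nu> + \<beta>))) + 1)))"
begin

definition "Lp = max L_f (norm (f (\<lambda>_. 0)))"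
definition "Kc = 1 / (1 - 2 powr (1 - (\<nu> + \<beta>)))"
definition "Cc = 2 * (norm (g (\<lambda>_. 0)) + Lp + L_g * (Kc + 1))"
definition "Aof t = sup_norm (-r) t x + hol_semi \<beta> (-r) t x"

lemma Cc_eq: "Cc = 2 * (norm (g (\<lambda>_. 0)) + max L_f (norm (f (\<lambda>_. 0)))
                         + L_g * (1 / (1 - 2 powr (1 - (\<nu> + \<beta>))) + 1))"
  unfolding Cc_def Lp_def Kc_def ..

lemma Lg0: "0 \<le> L_g" by (rule Lg_nonneg[OF r_pos H_g2])

lemma Kc_pos: "0 < Kc"
proof -
  have "(2::real) powr (1 - (\<nu> + \<beta>)) < 2 powr 0"
    by (rule powr_less_mono) (use beta in auto)
  then show ?thesis unfolding Kc_def by simp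
qed

lemma Lp0: "0 \<le> Lp" unfolding Lp_def by (simp add: le_max_iff_disj)

lemma mu_lt: "\<mu> < Cc" "\<mu> < 1" using mu unfolding Cc_eq by auto

lemma Cc_pos: "0 < Cc" using mu_lt mu by linarith

lemma xc: "continuous_on {-r..T} x" by (rule holder_on_cont[OF x_hol beta(1)])

lemma xh: "0 \<le> t \<Longrightarrow> t \<le> T \<Longrightarrow> holder_on \<beta> (-r) t x"
  by (rule holder_on_subset[OF x_hol]) auto

lemma xct: "t \<le> T \<Longrightarrow> continuous_on {-r..t} x"
  by (rule continuous_on_subset[OF xc]) auto

lemma Aof_parts:
  assumes "0 \<le> t" "t \<le> T"
  shows "0 \<le> sup_norm (-r) t x" "0 \<le> hol_semi \<beta> (-r) t x" "sup_norm (-r) t x \<le> Aof t"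
    "hol_semi \<beta> (-r) t x \<le> Aof t" "0 \<le> Aof t"
proof -
  show a: "0 \<le> sup_norm (-r) t x" by (rule sup_norm_ge0[OF xct]) (use assms in auto)
  show b: "0 \<le> hol_semi \<beta> (-r) t x" by (rule hol_semi_ge0[OF xh]) (use assms in auto)
  show "sup_norm (-r) t x \<le> Aof t" "hol_semi \<beta> (-r) t x \<le> Aof t" "0 \<le> Aof t"
    unfolding Aof_def using a b by auto
qed

lemma Aof_mono:
  assumes "0 \<le> u" "u \<le> t" "t \<le> T"
  shows "Aof u \<le> Aof t"
proof -
  have "sup_norm (-r) u x \<le> sup_norm (-r) t x"
    by (rule sup_norm_le) (use assms Aof_parts[of t] in \<open>auto intro!: sup_norm_upper[OF xct]\<close>)
  moreover have "hol_semi \<beta> (-r) u x \<le> hol_semi \<beta> (-r) t x"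
    by (rule hol_semi_mono[OF xh]) (use assms in auto)
  ultimately show ?thesis unfolding Aof_def by simp
qed

lemma seg_C: "0 \<le> v \<Longrightarrow> v \<le> T \<Longrightarrow> in_Cr r (seg x v)"
  by (rule seg_inCr[OF xc])

lemma cr_nonneg: "in_Cr r \<xi> \<Longrightarrow> 0 \<le> cr_norm r \<xi>"
  unfolding in_Cr_def cr_norm_def by (rule sup_norm_ge0)

lemma F_cont: "continuous_on {0..T} (\<lambda>v. f (seg x v))"
proof (rule holder_cont[of "\<bar>L_f\<bar> * hol_semi \<beta> (-r) T x" \<beta>])
  show "0 \<le> \<bar>L_f\<bar> * hol_semi \<beta> (-r) T x" using hol_semi_ge0[OF x_hol] by simp
  show "0 < \<beta>" by (rule beta(1))
  fix s t assume st: "s \<in> {0..T}" "t \<in> {0..T}" "s < t"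
  have C1: "in_Cr r (\<lambda>u. seg x t u - seg x s u)"
    using seg_C[of t] seg_C[of s] st unfolding in_Cr_def by (auto intro!: continuous_intros)
  have "norm (f (seg x t) - f (seg x s)) \<le> L_f * cr_norm r (\<lambda>u. seg x t u - seg x s u)"
    using H_f seg_C st by auto
  also have "\<dots> \<le> \<bar>L_f\<bar> * cr_norm r (\<lambda>u. seg x t u - seg x s u)"
    using cr_nonneg[OF C1] by (intro mult_right_mono) auto
  also have "\<dots> \<le> \<bar>L_f\<bar> * (hol_semi \<beta> (-r) T x * \<bar>t - s\<bar> powr \<beta>)"
    by (intro mult_left_mono seg_diff_norm[OF x_hol]) (use st in auto)
  finally show "norm (f (seg x t) - f (seg x s)) \<le> \<bar>L_f\<bar> * hol_semi \<beta> (-r) T x * (t - s) powr \<beta>"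
    using st by (simp add: mult.assoc)
qed

lemma pair_est:
  assumes a: "0 \<le> a" "a \<le> s" "s < u" "u \<le> T"
    and Ph: "Cc * ((u - a) powr (1 - \<beta>) + (u - a) powr (\<nu> - \<beta>) * hol_semi \<nu> a u \<omega>) \<le> \<mu>"
  shows "norm (x u - x s) \<le> \<mu> / 2 * (1 + Aof u) * (u - s) powr \<beta>"
proof -
  define Y where "Y = (\<lambda>v. g (seg x v))"
  define F where "F = (\<lambda>v. f (seg x v))"
  obtain Iu where Iu: "has_young_integral Y \<omega> 0 u Iu" and xu: "x u = \<eta> 0 + integral {0..u} F + Iu"
    using x_sol a unfolding Y_def F_def by force
  obtain Is where Is: "has_young_integral Y \<omega> 0 s Is" and xs: "x s = \<eta> 0 + integral {0..s} F + Is"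
    using x_sol a unfolding Y_def F_def by force
  define A where "A = Aof u"
  define S where "S = hol_semi \<beta> (-r) u x"
  define W where "W = hol_semi \<nu> a u \<omega>"
  define ng where "ng = norm (g (\<lambda>_. 0))"
  define d where "d = u - s"
  define e where "e = u - a"
  have u0: "0 \<le> u" using a by simp
  have A0: "0 \<le> A" and S0: "0 \<le> S" and SA: "S \<le> A" and supA: "sup_norm (-r) u x \<le> A"
    using Aof_parts[OF u0 a(4)] unfolding A_def S_def by auto
  have hw: "holder_on \<nu> a u \<omega>" by (rule holder_on_subset[OF omega_hol]) (use a in auto)
  have W0: "0 \<le> W" unfolding W_def by (rule hol_semi_ge0[OF hw])
  have ng0: "0 \<le> ng" unfolding ng_def by simp
  have d0: "0 < d" and de: "d \<le> e" unfolding d_def e_def using a by auto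
  have e1: "e < 1"
  proof (rule ccontr)
    assume "\<not> e < 1"
    then have "1 \<le> e powr (1 - \<beta>)" using beta nu by (intro ge_one_powr_ge_zero) auto
    moreover have "0 \<le> e powr (\<nu> - \<beta>) * W" using W0 by simp
    ultimately have "Cc * 1 \<le> Cc * (e powr (1 - \<beta>) + e powr (\<nu> - \<beta>) * W)"
      using Cc_pos by (intro mult_left_mono) auto
    then show False using Ph mu_lt unfolding e_def W_def by simp
  qed
  have cr_seg: "cr_norm r (seg x v) \<le> A" if "v \<in> {0..u}" for v
    using seg_norm[OF xct[OF a(4)], of v] that supA by auto
  have Fc: "continuous_on {0..u} F" unfolding F_def by (rule continuous_on_subset[OF F_cont]) (use a in auto)
  have comb: "integral {0..s} F + integral {s..u} F = integral {0..u} F"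
    by (rule Henstock_Kurzweil_Integration.integral_combine) (use a in \<open>auto intro: integrable_continuous_interval[OF Fc]\<close>)
  have intb: "norm (integral {s..u} F) \<le> Lp * (1 + A) * d"
    unfolding d_def
  proof (rule integral_bound)
    show "s \<le> u" using a by simp
    show "continuous_on {s..u} F" by (rule continuous_on_subset[OF Fc]) (use a in auto)
    fix v assume v: "v \<in> {s..u}"
    then have v': "v \<in> {0..u}" using a by auto
    have C: "in_Cr r (seg x v)" by (rule seg_C) (use v' a in auto)
    have "norm (F v) \<le> norm (f (\<lambda>_. 0)) + L_f * cr_norm r (seg x v)"
      unfolding F_def by (rule f_bound[OF H_f C])
    also have "\<dots> \<le> Lp + Lp * A"
    proof (rule add_mono)
      show "norm (f (\<lambda>_. 0)) \<le> Lp" unfolding Lp_def by simp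
      have "L_f * cr_norm r (seg x v) \<le> Lp * cr_norm r (seg x v)"
        using cr_nonneg[OF C] unfolding Lp_def by (intro mult_right_mono) auto
      also have "\<dots> \<le> Lp * A" using cr_seg[OF v'] Lp0 by (intro mult_left_mono) auto
      finally show "L_f * cr_norm r (seg x v) \<le> Lp * A" .
    qed
    finally show "norm (F v) \<le> Lp * (1 + A)" by (simp add: algebra_simps)
  qed
  have Hy: "norm (Y v - Y w) \<le> (L_g * S) * \<bar>v - w\<bar> powr \<beta>" if "v \<in> {s..u}" "w \<in> {s..u}" for v w
  proof -
    have C: "in_Cr r (seg x v)" "in_Cr r (seg x w)" using that a by (auto intro!: seg_C)
    have "norm (Y v - Y w) \<le> L_g * cr_norm r (\<lambda>t. seg x v t - seg x w t)"
      unfolding Y_def by (rule g_lip[OF H_g1 H_g2 C])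
    also have "\<dots> \<le> L_g * (S * \<bar>v - w\<bar> powr \<beta>)" unfolding S_def
      by (intro mult_left_mono seg_diff_norm[OF xh] Lg0) (use that a in auto)
    finally show ?thesis by (simp add: mult.assoc)
  qed
  have Hw: "\<bar>\<omega> v - \<omega> w\<bar> \<le> W * \<bar>v - w\<bar> powr \<nu>" if "v \<in> {s..u}" "w \<in> {s..u}" for v w
    using hol_abs[OF hw, of v w] that a unfolding W_def by auto
  have young: "norm (Iu - Is - (\<omega> u - \<omega> s) *\<^sub>R Y s) \<le> (L_g * S) * W * d powr (\<beta> + \<nu>) / (1 - 2 powr (1 - (\<beta> + \<nu>)))"
    unfolding d_def
    by (rule young_est[OF Iu Is _ a(3) _ W0 beta(3) Hy Hw]) (use a S0 Lg0 in auto)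
  also have "\<dots> = Kc * L_g * S * W * d powr (\<beta> + \<nu>)" unfolding Kc_def by (simp add: add.commute)
  finally have young': "norm (Iu - Is - (\<omega> u - \<omega> s) *\<^sub>R Y s) \<le> Kc * L_g * S * W * d powr (\<beta> + \<nu>)" .
  have Ys: "norm (Y s) \<le> ng + L_g * A"
  proof -
    have C: "in_Cr r (seg x s)" using a by (intro seg_C) auto
    have C0: "in_Cr r (\<lambda>_::real. 0::'a)" unfolding in_Cr_def by simp
    have "norm (Y s - g (\<lambda>_. 0)) \<le> L_g * cr_norm r (\<lambda>t. seg x s t - 0)"
      unfolding Y_def by (rule g_lip[OF H_g1 H_g2 C C0])
    also have "\<dots> \<le> L_g * A" using cr_seg[of s] a Lg0 by (intro mult_left_mono) auto
    finally show ?thesis unfolding ng_def using norm_triangle_ineq2[of "Y s" "g (\<lambda>_. 0)"] by linarith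
  qed
  have om_us: "\<bar>\<omega> u - \<omega> s\<bar> \<le> W * d powr \<nu>"
    using Hw[of u s] a unfolding d_def by auto
  define P1 where "P1 = integral {s..u} F"
  define P2 where "P2 = (\<omega> u - \<omega> s) *\<^sub>R Y s"
  define P3 where "P3 = Iu - Is - (\<omega> u - \<omega> s) *\<^sub>R Y s"
  have eq: "x u - x s = P1 + P2 + P3"
    unfolding xu xs comb[symmetric] P1_def P2_def P3_def by (simp add: algebra_simps)
  have "norm (x u - x s) \<le> norm (P1 + P2) + norm P3" unfolding eq by (rule norm_triangle_ineq)
  also have "\<dots> \<le> norm P1 + norm P2 + norm P3" using norm_triangle_ineq[of P1 P2] by linarith
  finally have "norm (x u - x s) \<le> norm (integral {s..u} F) + norm ((\<omega> u - \<omega> s) *\<^sub>R Y s)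
      + norm (Iu - Is - (\<omega> u - \<omega> s) *\<^sub>R Y s)" unfolding P1_def P2_def P3_def .
  also have "\<dots> \<le> Lp * (1 + A) * d + W * d powr \<nu> * (ng + L_g * A) + Kc * L_g * S * W * d powr (\<beta> + \<nu>)"
  proof (intro add_mono intb young')
    have "norm ((\<omega> u - \<omega> s) *\<^sub>R Y s) = \<bar>\<omega> u - \<omega> s\<bar> * norm (Y s)" by simp
    also have "\<dots> \<le> W * d powr \<nu> * (ng + L_g * A)"
      using om_us Ys by (intro mult_mono) auto
    finally show "norm ((\<omega> u - \<omega> s) *\<^sub>R Y s) \<le> W * d powr \<nu> * (ng + L_g * A)" .
  qed
  also have "\<dots> \<le> \<mu> / 2 * (1 + A) * d powr \<beta>"
  proof -
    define R where "R = d powr \<beta>"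
    define P where "P = e powr (1 - \<beta>)"
    define Q where "Q = e powr (\<nu> - \<beta>)"
    have R0: "0 \<le> R" "0 \<le> P" "0 \<le> Q" unfolding R_def P_def Q_def by auto
    have dsplit: "d powr (\<beta> + p) = R * d powr p" for p unfolding R_def by (rule powr_add)
    have p1: "d \<le> R * P"
    proof -
      have "d = d powr (\<beta> + (1 - \<beta>))" using d0 by simp
      also have "\<dots> = R * d powr (1 - \<beta>)" by (rule dsplit)
      also have "\<dots> \<le> R * P" unfolding P_def using R0 d0 de beta nu
        by (intro mult_left_mono powr_mono2) auto
      finally show ?thesis .
    qed
    have p2: "d powr \<nu> \<le> R * Q"
    proof -
      have "d powr \<nu> = d powr (\<beta> + (\<nu> - \<beta>))" by simp
      also have "\<dots> = R * d powr (\<nu> - \<beta>)" by (rule dsplit)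
      also have "\<dots> \<le> R * Q" unfolding Q_def using R0 d0 de beta
        by (intro mult_left_mono powr_mono2) auto
      finally show ?thesis .
    qed
    have p3: "d powr (\<beta> + \<nu>) \<le> R * Q"
    proof -
      have "d powr (\<beta> + \<nu>) = R * d powr \<nu>" by (rule dsplit)
      also have "\<dots> \<le> R * d powr (\<nu> - \<beta>)" using R0 d0 de e1 beta
        by (intro mult_left_mono powr_mono') auto
      also have "\<dots> \<le> R * Q" unfolding Q_def using R0 d0 de beta
        by (intro mult_left_mono powr_mono2) auto
      finally show ?thesis .
    qed
    have t1: "Lp * (1 + A) * d \<le> Lp * (1 + A) * (R * P)"
      using p1 Lp0 A0 by (intro mult_left_mono) auto
    have t2: "W * d powr \<nu> * (ng + L_g * A) \<le> W * (R * Q) * ((ng + L_g) * (1 + A))"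
    proof (intro mult_mono mult_left_mono p2)
      show "ng + L_g * A \<le> (ng + L_g) * (1 + A)" using ng0 A0 Lg0 by (simp add: algebra_simps)
    qed (use W0 R0 ng0 Lg0 A0 in auto)
    have t3: "Kc * L_g * S * W * d powr (\<beta> + \<nu>) \<le> Kc * L_g * (1 + A) * W * (R * Q)"
      using Kc_pos Lg0 S0 SA W0 p3 R0
      by (intro mult_mono) (auto intro!: mult_nonneg_nonneg)
    have sum: "Lp * (1 + A) * (R * P) + W * (R * Q) * ((ng + L_g) * (1 + A)) + Kc * L_g * (1 + A) * W * (R * Q)
        = R * (1 + A) * (Lp * P + W * Q * (ng + L_g + Kc * L_g))"
      by (simp add: algebra_simps)
    have inner: "Lp * P + W * Q * (ng + L_g + Kc * L_g) \<le> Cc / 2 * (P + W * Q)"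
    proof -
      have "Lp \<le> Cc / 2" unfolding Cc_def using ng0 Lg0 Kc_pos unfolding ng_def by simp
      moreover have "ng + L_g + Kc * L_g \<le> Cc / 2" unfolding Cc_def ng_def using Lp0 by (simp add: algebra_simps)
      ultimately have "Lp * P + W * Q * (ng + L_g + Kc * L_g) \<le> Cc / 2 * P + W * Q * (Cc / 2)"
        using R0 W0 by (intro add_mono mult_right_mono mult_left_mono) auto
      then show ?thesis by (simp add: algebra_simps)
    qed
    have ph: "Cc / 2 * (P + W * Q) \<le> \<mu> / 2"
      using Ph unfolding P_def Q_def W_def e_def by (simp add: algebra_simps)
    have "Lp * (1 + A) * d + W * d powr \<nu> * (ng + L_g * A) + Kc * L_g * S * W * d powr (\<beta> + \<nu>)
        \<le> R * (1 + A) * (Lp * P + W * Q * (ng + L_g + Kc * L_g))"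
      using t1 t2 t3 sum by linarith
    also have "\<dots> \<le> R * (1 + A) * (\<mu> / 2)"
      using inner ph R0 A0 by (intro mult_left_mono) auto
    finally show ?thesis unfolding R_def by (simp add: algebra_simps)
  qed
  finally show ?thesis unfolding A_def d_def .
qed

end


lemma downset_eq:
  fixes D :: "nat set"
  assumes fin: "finite D" and pos: "\<And>i. i \<in> D \<Longrightarrow> 1 \<le> i"
    and down: "\<And>i j. i \<in> D \<Longrightarrow> 1 \<le> j \<Longrightarrow> j \<le> i \<Longrightarrow> j \<in> D"
  shows "D = {1..card D}"
proof (cases "D = {}")
  case False
  define M where "M = Max D"
  have M: "M \<in> D" unfolding M_def using fin False by simp
  have "D = {1..M}"
  proof
    show "D \<subseteq> {1..M}" using pos fin unfolding M_def by auto
    show "{1..M} \<subseteq> D" using down[OF M] by auto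
  qed
  then show ?thesis by simp
qed simp

declare stop_time.simps[simp del]

context setting
begin

abbreviation "tau \<equiv> stop_time Cc \<mu> \<beta> \<nu> \<omega> T"

lemmas tprops = tau_props[OF Cc_pos mu(1) mu_lt(1) beta(1) beta(2) nu T_pos omega_hol]
lemmas tmono = tau_mono[OF Cc_pos mu(1) mu_lt(1) beta(1) beta(2) nu T_pos omega_hol]
lemma tPhi: "tau i \<le> u \<Longrightarrow> u < tau (Suc i) \<Longrightarrow>
    Cc * ((u - tau i) powr (1 - \<beta>) + (u - tau i) powr (\<nu> - \<beta>) * hol_semi \<nu> (tau i) u \<omega>) \<le> \<mu>"
  using tau_Phi[OF Cc_pos mu(1) mu_lt(1) beta(1) beta(2) nu T_pos omega_hol, of i u] unfolding Phi_def[OF Cc_pos mu(1) mu_lt(1) beta(1) beta(2) nu T_pos omega_hol] by blast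
lemmas tcount = count_bound[OF Cc_pos mu(1) mu_lt(1) beta(1) beta(2) nu T_pos omega_hol]

lemma step:
  assumes a: "0 \<le> a" "a \<le> S" "S \<le> T"
    and Ph: "\<And>u. a \<le> u \<Longrightarrow> u < S \<Longrightarrow> Cc * ((u - a) powr (1 - \<beta>) + (u - a) powr (\<nu> - \<beta>) * hol_semi \<nu> a u \<omega>) \<le> \<mu>"
  shows "(1 + Aof S) * (1 - \<mu>) \<le> 1 + Aof a"
proof (cases "a = S")
  case True
  have "0 \<le> 1 + Aof a" using Aof_parts[of a] a by simp
  then have "(1 + Aof a) * (1 - \<mu>) \<le> (1 + Aof a) * 1" using mu by (intro mult_left_mono) auto
  then show ?thesis using True by simp
next
  case False
  then have aS: "a < S" using a by simp
  have S0: "0 \<le> S" using a by simp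
  define B where "B = \<mu> / 2 * (1 + Aof S)"
  have B0: "0 \<le> B" unfolding B_def using Aof_parts[OF S0 a(3)] mu by simp
  have S1: "S - a \<le> 1"
  proof (rule ccontr)
    assume "\<not> S - a \<le> 1"
    then have lt: "a + 1 < S" by simp
    have "holder_on \<nu> a (a + 1) \<omega>" by (rule holder_on_subset[OF omega_hol]) (use a lt in auto)
    then have h0: "0 \<le> hol_semi \<nu> a (a + 1) \<omega>" by (rule hol_semi_ge0)
    have "Cc * (1 + hol_semi \<nu> a (a + 1) \<omega>) \<le> \<mu>" using Ph[of "a + 1"] lt by simp
    moreover have "Cc * 1 \<le> Cc * (1 + hol_semi \<nu> a (a + 1) \<omega>)" using h0 Cc_pos by (intro mult_left_mono) auto
    ultimately show False using mu_lt by simp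
  qed
  have pairs_open: "norm (x u - x s) \<le> B * (u - s) powr \<beta>" if "a \<le> s" "s < u" "u < S" for s u
  proof -
    have "norm (x u - x s) \<le> \<mu> / 2 * (1 + Aof u) * (u - s) powr \<beta>"
      by (rule pair_est) (use that a Ph in auto)
    also have "\<dots> \<le> B * (u - s) powr \<beta>" unfolding B_def
      using Aof_mono[of u S] that a mu by (intro mult_right_mono mult_left_mono) auto
    finally show ?thesis .
  qed
  have pairs: "norm (x u - x s) \<le> B * (u - s) powr \<beta>" if "a \<le> s" "s < u" "u \<le> S" for s u
  proof (cases "u < S")
    case True then show ?thesis using pairs_open that by auto
  next
    case False
    then have uS: "u = S" using that by simp
    define \<phi> where "\<phi> = (\<lambda>v. norm (x v - x s) - B * (v - s) powr \<beta>)"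
    have sS: "s < S" using that uS by simp
    have xsS: "continuous_on {s..S} x" by (rule continuous_on_subset[OF xc]) (use that a r_pos in auto)
    have cont: "continuous_on {s..S} \<phi>" unfolding \<phi>_def
      by (intro continuous_on_diff continuous_on_norm continuous_on_mult continuous_on_const xsS
          cont_powr_shift) (use beta in auto)
    have "\<phi> S \<le> 0"
    proof (rule continuous_le_on_closure[of "{s..<S}" \<phi>])
      show "continuous_on (closure {s..<S}) \<phi>" using sS cont by simp
      show "S \<in> closure {s..<S}" using sS by simp
      fix v assume v: "v \<in> {s..<S}"
      show "\<phi> v \<le> 0"
      proof (cases "v = s")
        case True then show ?thesis unfolding \<phi>_def by simp
      next
        case False
        then show ?thesis using pairs_open[of s v] v that unfolding \<phi>_def by auto
      qed
    qed
    then show ?thesis unfolding \<phi>_def uS by simp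
  qed
  define Sa where "Sa = hol_semi \<beta> (-r) a x"
  define Na where "Na = sup_norm (-r) a x"
  have Sa0: "0 \<le> Sa" and Na0: "0 \<le> Na" using Aof_parts[of a] a unfolding Sa_def Na_def by auto
  have ha: "holder_on \<beta> (-r) a x" using xh a by simp
  have hs: "hol_semi \<beta> (-r) S x \<le> Sa + B"
  proof (rule hol_semi_le)
    show "0 \<le> Sa + B" using Sa0 B0 by simp
    fix s u assume su: "-r \<le> s" "s < u" "u \<le> S"
    have mono: "(Sa + B) * p \<le> (Sa + B) * q" if "p \<le> q" for p q using that Sa0 B0 by (intro mult_left_mono) auto
    consider "u \<le> a" | "a \<le> s" | "s < a" "a < u" by linarith
    then show "norm (x u - x s) \<le> (Sa + B) * (u - s) powr \<beta>"
    proof cases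
      case 1
      have "norm (x u - x s) \<le> Sa * (u - s) powr \<beta>" unfolding Sa_def
        by (rule hol_semi_upper[OF ha]) (use su 1 in auto)
      also have "\<dots> \<le> (Sa + B) * (u - s) powr \<beta>" using B0 by (intro mult_right_mono) auto
      finally show ?thesis .
    next
      case 2
      have "norm (x u - x s) \<le> B * (u - s) powr \<beta>" by (rule pairs) (use su 2 in auto)
      also have "\<dots> \<le> (Sa + B) * (u - s) powr \<beta>" using Sa0 by (intro mult_right_mono) auto
      finally show ?thesis .
    next
      case 3
      have "norm (x u - x s) \<le> norm (x u - x a) + norm (x a - x s)" by (rule norm_diff_triangle_ineq[of "x u" "x a" "x a" "x s", simplified])
      also have "\<dots> \<le> B * (u - a) powr \<beta> + Sa * (a - s) powr \<beta>"
      proof (rule add_mono)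
        show "norm (x u - x a) \<le> B * (u - a) powr \<beta>" by (rule pairs) (use su 3 in auto)
        show "norm (x a - x s) \<le> Sa * (a - s) powr \<beta>" unfolding Sa_def
          by (rule hol_semi_upper[OF ha]) (use su 3 in auto)
      qed
      also have "\<dots> \<le> B * (u - s) powr \<beta> + Sa * (u - s) powr \<beta>"
        using 3 B0 Sa0 beta by (intro add_mono mult_left_mono powr_mono2) auto
      finally show ?thesis by (simp add: algebra_simps)
    qed
  qed
  have sn: "sup_norm (-r) S x \<le> Na + B"
  proof (rule sup_norm_le)
    show "0 \<le> Na + B" using Na0 B0 by simp
    fix v assume v: "v \<in> {-r..S}"
    show "norm (x v) \<le> Na + B"
    proof (cases "v \<le> a")
      case True
      then have "norm (x v) \<le> Na" unfolding Na_def using v a by (intro sup_norm_upper[OF xct]) auto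
      then show ?thesis using B0 by simp
    next
      case False
      have "norm (x v) \<le> norm (x a) + norm (x v - x a)" by (rule norm_triangle_sub)
      also have "\<dots> \<le> Na + B * 1"
      proof (rule add_mono)
        show "norm (x a) \<le> Na" unfolding Na_def using a r_pos by (intro sup_norm_upper[OF xct]) auto
        have "norm (x v - x a) \<le> B * (v - a) powr \<beta>" by (rule pairs) (use False v in auto)
        also have "\<dots> \<le> B * 1" using B0 False v S1 beta by (intro mult_left_mono powr_le1) auto
        finally show "norm (x v - x a) \<le> B * 1" .
      qed
      finally show ?thesis by simp
    qed
  qed
  have "Aof S \<le> Aof a + 2 * B" using hs sn unfolding Aof_def Sa_def Na_def by simp
  then show ?thesis unfolding B_def by (simp add: algebra_simps)
qed

lemma tau_bound: "(1 + Aof (tau n)) * (1 - \<mu>) ^ n \<le> 1 + Aof 0"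
proof (induction n)
  case 0 then show ?case by (simp add: stop_time.simps(1))
next
  case (Suc n)
  have tn: "0 \<le> tau n" "tau n \<le> tau (Suc n)" "tau (Suc n) \<le> T"
    using tprops[of n] tprops[of "Suc n"] by blast+
  have st: "(1 + Aof (tau (Suc n))) * (1 - \<mu>) \<le> 1 + Aof (tau n)"
    by (rule step[OF tn tPhi[of n]])
  have "(1 + Aof (tau (Suc n))) * (1 - \<mu>) ^ Suc n = ((1 + Aof (tau (Suc n))) * (1 - \<mu>)) * (1 - \<mu>) ^ n"
    by (simp add: algebra_simps)
  also have "\<dots> \<le> (1 + Aof (tau n)) * (1 - \<mu>) ^ n" using st mu_lt by (intro mult_right_mono) auto
  also have "\<dots> \<le> 1 + Aof 0" by (rule Suc.IH)
  finally show ?case .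
qed

lemma Aof0: "Aof 0 = hol_norm \<beta> (-r) 0 \<eta>"
proof -
  have e: "\<And>t. t \<in> {-r..0} \<Longrightarrow> x t = \<eta> t" using x_init by auto
  show ?thesis unfolding Aof_def hol_norm_def using sup_norm_cong[OF e] hol_semi_cong[OF e] by simp
qed

lemma seg_le_Aof:
  assumes t: "0 \<le> t" "t \<le> T"
  shows "hol_norm \<beta> (-r) 0 (seg x t) \<le> Aof t"
proof -
  have "sup_norm (-r) 0 (seg x t) \<le> sup_norm (-r) t x"
    using seg_norm[OF xct[OF t(2)] t(1) order_refl] unfolding cr_norm_def .
  moreover have "hol_semi \<beta> (-r) 0 (seg x t) \<le> hol_semi \<beta> (-r) t x"
  proof (rule hol_semi_le)
    show "0 \<le> hol_semi \<beta> (-r) t x" using Aof_parts[OF t] by simp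
    fix s u :: real assume su: "-r \<le> s" "s < u" "u \<le> 0"
    have "norm (x (t + u) - x (t + s)) \<le> hol_semi \<beta> (-r) t x * ((t + u) - (t + s)) powr \<beta>"
      by (rule hol_semi_upper[OF xh[OF t]]) (use su t in auto)
    then show "norm (seg x t u - seg x t s) \<le> hol_semi \<beta> (-r) t x * (u - s) powr \<beta>"
      unfolding seg_def by simp
  qed
  ultimately show ?thesis unfolding hol_norm_def Aof_def by simp
qed

definition "kk = Suc (nat \<lceil>1 / (\<nu> - \<beta>)\<rceil>)"

lemma kk: "1 \<le> kk" "1 \<le> real kk * (\<nu> - \<beta>)"
proof -
  show "1 \<le> kk" unfolding kk_def by simp
  have "1 / (\<nu> - \<beta>) \<le> real kk" unfolding kk_def by linarith
  then show "1 \<le> real kk * (\<nu> - \<beta>)" using beta by (simp add: field_simps)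
qed

lemma SS_T_finite: "finite (stop_set Cc \<mu> \<beta> \<nu> \<omega> T T)"
proof -
  define X where "X = 2 ^ (kk - 1) * (T powr (real kk * (1 - \<beta>)) + T powr (real kk * (\<nu> - \<beta>)) * hol_semi \<nu> 0 T \<omega> ^ kk)"
  have q: "0 < (\<mu> / Cc) ^ kk" using mu Cc_pos by simp
  have "stop_set Cc \<mu> \<beta> \<nu> \<omega> T T \<subseteq> {..nat \<lceil>X / (\<mu> / Cc) ^ kk\<rceil>}"
  proof
    fix i assume "i \<in> stop_set Cc \<mu> \<beta> \<nu> \<omega> T T"
    then have "tau i < T" unfolding stop_set_def by simp
    then have "real i * (\<mu> / Cc) ^ kk \<le> X" unfolding X_def by (rule tcount[OF _ kk])
    then have "real i \<le> X / (\<mu> / Cc) ^ kk" using pos_le_divide_eq[OF q] by blast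
    then have "real i \<le> real_of_int \<lceil>X / (\<mu> / Cc) ^ kk\<rceil>" by (meson le_of_int_ceiling order_trans)
    then have "int i \<le> \<lceil>X / (\<mu> / Cc) ^ kk\<rceil>" by (metis of_int_le_iff of_int_of_nat_eq)
    then show "i \<in> {..nat \<lceil>X / (\<mu> / Cc) ^ kk\<rceil>}" using nat_mono by fastforce
  qed
  then show ?thesis by (rule finite_subset) simp
qed

lemma SS_struct:
  assumes t: "t \<le> T"
  shows "finite (stop_set Cc \<mu> \<beta> \<nu> \<omega> T t)"
    "stop_set Cc \<mu> \<beta> \<nu> \<omega> T t = {1..count_N Cc \<mu> \<beta> \<nu> \<omega> T t}"
proof -
  have sub: "stop_set Cc \<mu> \<beta> \<nu> \<omega> T t \<subseteq> stop_set Cc \<mu> \<beta> \<nu> \<omega> T T"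
    unfolding stop_set_def using t by auto
  show fin: "finite (stop_set Cc \<mu> \<beta> \<nu> \<omega> T t)" by (rule finite_subset[OF sub SS_T_finite])
  show "stop_set Cc \<mu> \<beta> \<nu> \<omega> T t = {1..count_N Cc \<mu> \<beta> \<nu> \<omega> T t}" unfolding count_N_def
  proof (rule downset_eq[OF fin])
    show "\<And>i. i \<in> stop_set Cc \<mu> \<beta> \<nu> \<omega> T t \<Longrightarrow> 1 \<le> i" unfolding stop_set_def by simp
    fix i j assume "i \<in> stop_set Cc \<mu> \<beta> \<nu> \<omega> T t" "1 \<le> j" "j \<le> i"
    then show "j \<in> stop_set Cc \<mu> \<beta> \<nu> \<omega> T t" unfolding stop_set_def using tmono[of j i] by auto
  qed
qed

theorem main1:
  assumes t: "t \<in> {0..T}"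
  shows "finite (stop_set Cc \<mu> \<beta> \<nu> \<omega> T t) \<and>
     hol_norm \<beta> (-r) 0 (seg x t) \<le> inverse ((1 - \<mu>) ^ (count_N Cc \<mu> \<beta> \<nu> \<omega> T t + 1)) * (hol_norm \<beta> (-r) 0 \<eta> + 1)"
proof
  have t0: "0 \<le> t" and tT: "t \<le> T" using t by auto
  show "finite (stop_set Cc \<mu> \<beta> \<nu> \<omega> T t)" using SS_struct(1)[OF tT] .
  define n where "n = count_N Cc \<mu> \<beta> \<nu> \<omega> T t"
  have eq: "stop_set Cc \<mu> \<beta> \<nu> \<omega> T t = {1..n}" using SS_struct(2)[OF tT] unfolding n_def .
  have lo: "tau n \<le> t"
  proof (cases "n = 0")
    case True then show ?thesis using t0 by (simp add: stop_time.simps(1))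
  next
    case False
    then have "n \<in> stop_set Cc \<mu> \<beta> \<nu> \<omega> T t" unfolding eq by simp
    then show ?thesis unfolding stop_set_def by simp
  qed
  have hi: "t \<le> tau (Suc n)"
  proof (rule ccontr)
    assume "\<not> t \<le> tau (Suc n)"
    then have "Suc n \<in> stop_set Cc \<mu> \<beta> \<nu> \<omega> T t" unfolding stop_set_def by simp
    then show False unfolding eq by simp
  qed
  have tn: "0 \<le> tau n" using tprops[of n] by blast
  have Ph: "Cc * ((u - tau n) powr (1 - \<beta>) + (u - tau n) powr (\<nu> - \<beta>) * hol_semi \<nu> (tau n) u \<omega>) \<le> \<mu>"
    if "tau n \<le> u" "u < t" for u
    by (rule tPhi[of n u]) (use that hi in linarith)+
  have st: "(1 + Aof t) * (1 - \<mu>) \<le> 1 + Aof (tau n)"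
    by (rule step[OF tn lo tT Ph])
  have bn: "(1 + Aof (tau n)) * (1 - \<mu>) ^ n \<le> 1 + Aof 0" by (rule tau_bound)
  have m1: "0 < 1 - \<mu>" using mu_lt by simp
  have "(1 + Aof t) * (1 - \<mu>) ^ (n + 1) = ((1 + Aof t) * (1 - \<mu>)) * (1 - \<mu>) ^ n" by (simp add: algebra_simps)
  also have "\<dots> \<le> (1 + Aof (tau n)) * (1 - \<mu>) ^ n" using st m1 by (intro mult_right_mono) auto
  also have "\<dots> \<le> 1 + hol_norm \<beta> (-r) 0 \<eta>" using bn Aof0 by simp
  finally have fin: "(1 + Aof t) * (1 - \<mu>) ^ (n + 1) \<le> 1 + hol_norm \<beta> (-r) 0 \<eta>" .
  have pp: "0 < (1 - \<mu>) ^ (n + 1)" using m1 by simp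
  have "hol_norm \<beta> (-r) 0 (seg x t) \<le> Aof t" by (rule seg_le_Aof[OF t0 tT])
  also have "\<dots> \<le> 1 + Aof t" by simp
  also have "\<dots> \<le> (1 + hol_norm \<beta> (-r) 0 \<eta>) / (1 - \<mu>) ^ (n + 1)" using fin pp by (simp add: field_simps)
  finally show "hol_norm \<beta> (-r) 0 (seg x t) \<le> inverse ((1 - \<mu>) ^ (count_N Cc \<mu> \<beta> \<nu> \<omega> T t + 1)) * (hol_norm \<beta> (-r) 0 \<eta> + 1)"
    unfolding n_def[symmetric] by (simp add: field_simps)
qed

theorem main2:
  assumes k: "1 \<le> k" "real k * (\<nu> - \<beta>) \<ge> 1"
  shows "real (count_N Cc \<mu> \<beta> \<nu> \<omega> T T)
      \<le> 2 ^ (k - 1) * (Cc / \<mu>) ^ k * (T powr (real k * (1 - \<beta>)) + T powr (real k * (\<nu> - \<beta>)) * hol_semi \<nu> 0 T \<omega> ^ k)"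
proof -
  define n where "n = count_N Cc \<mu> \<beta> \<nu> \<omega> T T"
  define X where "X = 2 ^ (k - 1) * (T powr (real k * (1 - \<beta>)) + T powr (real k * (\<nu> - \<beta>)) * hol_semi \<nu> 0 T \<omega> ^ k)"
  have eq: "stop_set Cc \<mu> \<beta> \<nu> \<omega> T T = {1..n}" using SS_struct(2)[OF order_refl] unfolding n_def .
  have X0: "0 \<le> X" unfolding X_def using hol_semi_ge0[OF omega_hol] by (intro mult_nonneg_nonneg add_nonneg_nonneg) auto
  have q: "0 < (\<mu> / Cc) ^ k" using mu Cc_pos by simp
  have "real n * (\<mu> / Cc) ^ k \<le> X"
  proof (cases "n = 0")
    case True then show ?thesis using X0 by simp
  next
    case False
    then have "n \<in> stop_set Cc \<mu> \<beta> \<nu> \<omega> T T" unfolding eq by simp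
    then have "tau n < T" unfolding stop_set_def by simp
    then show ?thesis unfolding X_def by (rule tcount[OF _ k(1) k(2)])
  qed
  then have "real n \<le> X / (\<mu> / Cc) ^ k" using pos_le_divide_eq[OF q] by blast
  also have "X / (\<mu> / Cc) ^ k = 2 ^ (k - 1) * (Cc / \<mu>) ^ k * (T powr (real k * (1 - \<beta>)) + T powr (real k * (\<nu> - \<beta>)) * hol_semi \<nu> 0 T \<omega> ^ k)"
    unfolding X_def using mu Cc_pos by (simp add: field_simps power_divide)
  finally show ?thesis unfolding n_def .
qed

end


theorem theorem2:
  fixes r T \<nu> \<delta> \<beta> L_f L_g \<mu> :: real
    and \<omega> :: "real \<Rightarrow> real"
    and f g :: "(real \<Rightarrow> 'a::euclidean_space) \<Rightarrow> 'a"
    and Dg :: "(real \<Rightarrow> 'a) \<Rightarrow> (real \<Rightarrow> 'a) \<Rightarrow> 'a"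
    and \<eta> x :: "real \<Rightarrow> 'a"
  assumes r_pos: "r > 0" and T_pos: "T > 0"
    and nu: "1/2 < \<nu>" "\<nu> \<le> 1"
    and omega_hol: "holder_on \<nu> 0 T \<omega>"
    and omega_little: "\<forall>\<epsilon>>0. \<exists>h>0. \<forall>s t. 0 \<le> s \<and> s < t \<and> t \<le> T \<and> t - s \<le> h \<longrightarrow>
                         \<bar>\<omega> t - \<omega> s\<bar> / (t - s) powr \<nu> \<le> \<epsilon>"
    and delta: "(1 - \<nu>) / \<nu> < \<delta>" "\<delta> \<le> 1"
    and beta: "0 < \<beta>" "\<beta> < \<nu>" "\<beta> * \<delta> + \<nu> > 1"
    and H_f: "\<forall>\<xi> \<zeta>. in_Cr r \<xi> \<and> in_Cr r \<zeta> \<longrightarrow>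
                 norm (f \<xi> - f \<zeta>) \<le> L_f * cr_norm r (\<lambda>u. \<xi> u - \<zeta> u)"
    and H_g1: "frechet_C1_Cr r g Dg"
    and H_g2: "\<forall>\<xi> h. in_Cr r \<xi> \<and> in_Cr r h \<longrightarrow> norm (Dg \<xi> h) \<le> L_g * cr_norm r h"
    and H_g3: "\<forall>M>0. \<exists>L_M. \<forall>\<xi> \<zeta> h. in_Cr r \<xi> \<and> in_Cr r \<zeta> \<and> in_Cr r h \<and>
                 cr_norm r \<xi> \<le> M \<and> cr_norm r \<zeta> \<le> M \<longrightarrow>
                 norm (Dg \<xi> h - Dg \<zeta> h) \<le> L_M * cr_norm r (\<lambda>u. \<xi> u - \<zeta> u) powr \<delta> * cr_norm r h"
    and eta_hol: "holder_on \<beta> (-r) 0 \<eta>"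
    and x_hol: "holder_on \<beta> (-r) T x"
    and x_init: "\<forall>u\<in>{-r..0}. x u = \<eta> u"
    and x_sol: "\<forall>t\<in>{0..T}. \<exists>I. has_young_integral (\<lambda>s. g (seg x s)) \<omega> 0 t I \<and>
                  x t = \<eta> 0 + integral {0..t} (\<lambda>s. f (seg x s)) + I"
    and mu: "0 < \<mu>" "\<mu> < min 1 (2 * (norm (g (\<lambda>_. 0)) + max L_f (norm (f (\<lambda>_. 0)))
                         + L_g * (1 / (1 - 2 powr (1 - (\<nu> + \<beta>))) + 1)))"
  shows "let C = 2 * (norm (g (\<lambda>_. 0)) + max L_f (norm (f (\<lambda>_. 0)))
                      + L_g * (1 / (1 - 2 powr (1 - (\<nu> + \<beta>))) + 1)) in
         (\<forall>t\<in>{0..T}. finite (stop_set C \<mu> \<beta> \<nu> \<omega> T t) \<and>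
            hol_norm \<beta> (-r) 0 (seg x t)
              \<le> inverse ((1 - \<mu>) ^ (count_N C \<mu> \<beta> \<nu> \<omega> T t + 1)) * (hol_norm \<beta> (-r) 0 \<eta> + 1))
       \<and> (\<forall>k::nat. 1 \<le> k \<and> real k * (\<nu> - \<beta>) \<ge> 1 \<longrightarrow>
            real (count_N C \<mu> \<beta> \<nu> \<omega> T T)
              \<le> 2 ^ (k - 1) * (C / \<mu>) ^ k
                 * (T powr (real k * (1 - \<beta>)) + T powr (real k * (\<nu> - \<beta>)) * hol_semi \<nu> 0 T \<omega> ^ k))"
  proof -
  have bn: "\<beta> + \<nu> > 1"
  proof -
    have "\<beta> * \<delta> \<le> \<beta> * 1" using beta(1) delta(2) by (intro mult_left_mono) auto
    then show ?thesis using beta(3) by linarith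
  qed
  interpret S: setting r T \<nu> \<beta> L_f L_g \<mu> \<omega> f g Dg \<eta> x
    by unfold_locales (rule r_pos T_pos nu(2) omega_hol beta(1) beta(2) bn H_f H_g1 H_g2 x_hol x_init x_sol mu)+
  show ?thesis unfolding Let_def S.Cc_eq[symmetric] using S.main1 S.main2 by blast
qed

end
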